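(* Assume $a+b\le1$. Let $v_1,\dots,v_k\in\mathsf V$ and $r_1,\dots,r_k,s_1,\dots,s_k\in\{0,1,\dots\}$. Then $$\mathbf E\big[\sigma(v_1)^{r_1+s_1}\cdots\sigma(v_k)^{r_k+s_k}\big]\ge\mathbf E\big[\sigma(v_1)^{r_1}\cdots\sigma(v_k)^{r_k}\big]\,\mathbf E\big[\sigma(v_1)^{s_1}\cdots\sigma(v_k)^{s_k}\big].$$
   Context: Let $M$ be a compact orientable surface without boundary, or the plane. Let $\mathsf G=(\mathsf V,\mathsf E)$ be a finite connected graph embedded in $M$ with all faces topological discs, and $\mathsf G^*=(\mathsf U,\mathsf E^* )$ its embedded dual ($\mathsf U$ = faces of $\mathsf G$); $e^*$ is the dual edge crossing $e$, $\xi^*=\{e^*:e\in\xi\}$. Fix integers $q,q'\ge1$, finite $Q\subset\mathbb R$, $Q'\subset\mathbb C$ with $Q=-Q$, $Q'=-Q'$, $|Q|=q$, $|Q'|=q'$, and $a,b\in(0,1]$. For $\sigma:\mathsf V\to Q$, $\eta(\sigma)\subseteq\mathsf E^*$ is the set of $e^*$ whose primal $e$ has endpoints with different $\sigma$-values; for $\sigma':\mathsf U\to Q'$, $\eta(\sigma')\subseteq\mathsf E$ is the set of $e$ whose dual $e^*$ has endpoints with different $\sigma'$-values. $\mathbf P(\sigma,\sigma')\propto a^{|\eta(\sigma')|}b^{|\eta(\sigma)|}$ on $\Sigma=\{(\sigma,\sigma'):\eta(\sigma)^*\cap\eta(\sigma')=\emptyset\}$, and $\mathbf E$ is expectation under $\mathbf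 P$. *)

theory Defs
  imports Complex_Main "HOL-Library.FuncSet" "HOL-Combinatorics.Permutations"
begin

text \<open>
  A finite connected graph cellularly embedded in a compact orientable surface is encoded
  (Heffter--Edmonds) by a combinatorial map: a finite set of darts D (half-edges), a
  fixed-point-free involution alpha on D (the two darts of an edge) and a permutation rho
  of D (cyclic order of darts around each vertex, given by the orientation).
  Vertices = orbits of rho, edges = orbits of alpha, faces = orbits of rho o alpha.
  The group generated by alpha and rho acts transitively (connectedness).
\<close>

definition orb :: "('d \<Rightarrow> 'd) \<Rightarrow> 'd \<Rightarrow> 'd set" where
  "orb f x = {(f ^^ n) x | n. True}"

definition comb_map :: "'d set \<Rightarrow> ('d \<Rightarrow> 'd) \<Rightarrow> ('d \<Rightarrow> 'd) \<Rightarrow> bool" where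
  "comb_map D alpha rho \<longleftrightarrow>
     finite D \<and> D \<noteq> {} \<and> alpha permutes D \<and> rho permutes D \<and>
     (\<forall>d\<in>D. alpha d \<noteq> d \<and> alpha (alpha d) = d) \<and>
     (\<forall>d\<in>D. \<forall>d'\<in>D. (d, d') \<in> ({(x, alpha x) | x. x \<in> D} \<union> {(x, rho x) | x. x \<in> D})\<^sup>*)"

definition vtx :: "('d \<Rightarrow> 'd) \<Rightarrow> 'd \<Rightarrow> 'd set" where
  "vtx rho d = orb rho d"

definition fce :: "('d \<Rightarrow> 'd) \<Rightarrow> ('d \<Rightarrow> 'd) \<Rightarrow> 'd \<Rightarrow> 'd set" where
  "fce alpha rho d = orb (rho \<circ> alpha) d"

definition verts :: "'d set \<Rightarrow> ('d \<Rightarrow> 'd) \<Rightarrow> 'd set set" where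
  "verts D rho = vtx rho ` D"

definition faces :: "'d set \<Rightarrow> ('d \<Rightarrow> 'd) \<Rightarrow> ('d \<Rightarrow> 'd) \<Rightarrow> 'd set set" where
  "faces D alpha rho = fce alpha rho ` D"

definition edges :: "'d set \<Rightarrow> ('d \<Rightarrow> 'd) \<Rightarrow> 'd set set" where
  "edges D alpha = (\<lambda>d. {d, alpha d}) ` D"

text \<open>eta(sigma): (duals of) edges whose primal endpoints carry different spins;
  identified with the set of the corresponding primal edges.\<close>
definition eta_primal :: "'d set \<Rightarrow> ('d \<Rightarrow> 'd) \<Rightarrow> ('d \<Rightarrow> 'd) \<Rightarrow> ('d set \<Rightarrow> real) \<Rightarrow> 'd set set" where
  "eta_primal D alpha rho \<sigma> =
     {e \<in> edges D alpha. \<exists>d\<in>D. e = {d, alpha d} \<and> \<sigma> (vtx rho d) \<noteq> \<sigma> (vtx rho (alpha d))}"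

definition eta_dual :: "'d set \<Rightarrow> ('d \<Rightarrow> 'd) \<Rightarrow> ('d \<Rightarrow> 'd) \<Rightarrow> ('d set \<Rightarrow> complex) \<Rightarrow> 'd set set" where
  "eta_dual D alpha rho \<sigma>' =
     {e \<in> edges D alpha. \<exists>d\<in>D. e = {d, alpha d} \<and> \<sigma>' (fce alpha rho d) \<noteq> \<sigma>' (fce alpha rho (alpha d))}"

definition configs :: "'d set \<Rightarrow> ('d \<Rightarrow> 'd) \<Rightarrow> ('d \<Rightarrow> 'd) \<Rightarrow> real set \<Rightarrow> complex set
    \<Rightarrow> (('d set \<Rightarrow> real) \<times> ('d set \<Rightarrow> complex)) set" where
  "configs D alpha rho Q Q' =
     {(\<sigma>, \<sigma>'). \<sigma> \<in> verts D rho \<rightarrow>\<^sub>E Q \<and> \<sigma>' \<in> faces D alpha rho \<rightarrow>\<^sub>E Q' \<and>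
               eta_primal D alpha rho \<sigma> \<inter> eta_dual D alpha rho \<sigma>' = {}}"

definition weight :: "'d set \<Rightarrow> ('d \<Rightarrow> 'd) \<Rightarrow> ('d \<Rightarrow> 'd) \<Rightarrow> real \<Rightarrow> real
    \<Rightarrow> ('d set \<Rightarrow> real) \<times> ('d set \<Rightarrow> complex) \<Rightarrow> real" where
  "weight D alpha rho a b c =
     a ^ card (eta_dual D alpha rho (snd c)) * b ^ card (eta_primal D alpha rho (fst c))"

definition expect :: "'d set \<Rightarrow> ('d \<Rightarrow> 'd) \<Rightarrow> ('d \<Rightarrow> 'd) \<Rightarrow> real set \<Rightarrow> complex set
    \<Rightarrow> real \<Rightarrow> real \<Rightarrow> (('d set \<Rightarrow> real) \<times> ('d set \<Rightarrow> complex) \<Rightarrow> real) \<Rightarrow> real" where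
  "expect D alpha rho Q Q' a b f =
     (\<Sum>c\<in>configs D alpha rho Q Q'. weight D alpha rho a b c * f c) /
     (\<Sum>c\<in>configs D alpha rho Q Q'. weight D alpha rho a b c)"

end

theory Submission
  imports Defs
begin



lemma ad2:
  fixes a0 a1 b0 b1 c0 c1 d0 d1 :: real
  assumes nn: "0 \<le> a0" "0 \<le> a1" "0 \<le> b0" "0 \<le> b1" "0 \<le> c0" "0 \<le> c1" "0 \<le> d0" "0 \<le> d1"
    and h1: "a0*b0 \<le> c0*d0" and h2: "a0*b1 \<le> c1*d0" and h3: "a1*b0 \<le> c1*d0" and h4: "a1*b1 \<le> c1*d1"
  shows "(a0+a1)*(b0+b1) \<le> (c0+c1)*(d0+d1)"
proof -
  define u where "u = a0*b1"
  define v where "v = a1*b0"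
  define s where "s = c1*d0"
  define t where "t = c0*d1"
  have uv: "u*v \<le> s*t"
  proof -
    have "u*v = (a0*b0)*(a1*b1)" unfolding u_def v_def by simp
    also have "\<dots> \<le> (c0*d0)*(c1*d1)"
      by (intro mult_mono h1 h4) (use nn in auto)
    also have "\<dots> = s*t" unfolding s_def t_def by simp
    finally show ?thesis .
  qed
  have us: "u \<le> s" "v \<le> s" using h2 h3 unfolding u_def v_def s_def by auto
  have u0: "0 \<le> u" "0 \<le> v" "0 \<le> t" "0 \<le> s" using nn unfolding u_def v_def t_def s_def by auto
  have key: "u + v \<le> s + t"
  proof (cases "s = 0")
    case True then show ?thesis using us u0 by auto
  next
    case False
    then have sp: "s > 0" using u0 by auto
    have "0 \<le> (s-u)*(s-v)" using us by auto
    then have "s*(u+v) \<le> s*s + u*v" by (simp add: algebra_simps)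
    also have "\<dots> \<le> s*s + s*t" using uv by simp
    finally have "s*(u+v) \<le> s*(s+t)" by (simp add: algebra_simps)
    then show ?thesis using sp by simp
  qed
  have "(a0+a1)*(b0+b1) = a0*b0 + a1*b1 + (u+v)" unfolding u_def v_def by (simp add: algebra_simps)
  also have "\<dots> \<le> c0*d0 + c1*d1 + (s+t)" using h1 h4 key by simp
  also have "\<dots> = (c0+c1)*(d0+d1)" unfolding s_def t_def by (simp add: algebra_simps)
  finally show ?thesis .
qed

lemma sum_Pow_insert:
  assumes "finite X" "x \<notin> X"
  shows "(\<Sum>A\<in>Pow (insert x X). h A) = (\<Sum>A\<in>Pow X. h A + h (insert x A))"
proof -
  have inj: "inj_on (insert x) (Pow X)"
  proof (rule inj_onI)
    fix A B assume "A \<in> Pow X" "B \<in> Pow X" "insert x A = insert x B"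
    then show "A = B" using assms(2) by (metis Diff_insert_absorb PowD subsetD)
  qed
  have disj: "Pow X \<inter> insert x ` Pow X = {}" using assms(2) by blast
  have "(\<Sum>A\<in>Pow (insert x X). h A) = (\<Sum>A\<in>Pow X. h A) + (\<Sum>A\<in>insert x ` Pow X. h A)"
    unfolding Pow_insert by (rule sum.union_disjoint) (use assms disj in auto)
  also have "(\<Sum>A\<in>insert x ` Pow X. h A) = (\<Sum>A\<in>Pow X. h (insert x A))"
    by (simp add: sum.reindex[OF inj])
  finally show ?thesis by (simp add: sum.distrib)
qed

theorem four_functions:
  fixes f1 f2 f3 f4 :: "'a set \<Rightarrow> real"
  assumes "finite X"
    and "\<And>A. A \<subseteq> X \<Longrightarrow> 0 \<le> f1 A" "\<And>A. A \<subseteq> X \<Longrightarrow> 0 \<le> f2 A"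
    and "\<And>A. A \<subseteq> X \<Longrightarrow> 0 \<le> f3 A" "\<And>A. A \<subseteq> X \<Longrightarrow> 0 \<le> f4 A"
    and "\<And>A B. A \<subseteq> X \<Longrightarrow> B \<subseteq> X \<Longrightarrow> f1 A * f2 B \<le> f3 (A \<union> B) * f4 (A \<inter> B)"
  shows "(\<Sum>A\<in>Pow X. f1 A) * (\<Sum>A\<in>Pow X. f2 A) \<le> (\<Sum>A\<in>Pow X. f3 A) * (\<Sum>A\<in>Pow X. f4 A)"
  using assms
proof (induction X arbitrary: f1 f2 f3 f4 rule: finite_induct)
  case empty
  then show ?case by simp
next
  case (insert x X)
  let ?g1 = "\<lambda>A. f1 A + f1 (insert x A)"
  let ?g2 = "\<lambda>A. f2 A + f2 (insert x A)"
  let ?g3 = "\<lambda>A. f3 A + f3 (insert x A)"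
  let ?g4 = "\<lambda>A. f4 A + f4 (insert x A)"
  have "(\<Sum>A\<in>Pow X. ?g1 A) * (\<Sum>A\<in>Pow X. ?g2 A) \<le> (\<Sum>A\<in>Pow X. ?g3 A) * (\<Sum>A\<in>Pow X. ?g4 A)"
  proof (rule insert.IH)
    fix A assume "A \<subseteq> X"
    then have "A \<subseteq> insert x X" "insert x A \<subseteq> insert x X" by auto
    then show "0 \<le> ?g1 A" "0 \<le> ?g2 A" "0 \<le> ?g3 A" "0 \<le> ?g4 A"
      using insert.prems by (auto intro: add_nonneg_nonneg)
  next
    fix A B assume AB: "A \<subseteq> X" "B \<subseteq> X"
    then have xA: "x \<notin> A" "x \<notin> B" using insert.hyps by auto
    have s: "A \<subseteq> insert x X" "B \<subseteq> insert x X" "insert x A \<subseteq> insert x X" "insert x B \<subseteq> insert x X"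
      "A \<union> B \<subseteq> insert x X" "A \<inter> B \<subseteq> insert x X" "insert x (A \<union> B) \<subseteq> insert x X"
      "insert x (A \<inter> B) \<subseteq> insert x X" using AB by auto
    have e1: "A \<union> insert x B = insert x (A \<union> B)" "A \<inter> insert x B = A \<inter> B"
      "insert x A \<union> B = insert x (A \<union> B)" "insert x A \<inter> B = A \<inter> B"
      "insert x A \<union> insert x B = insert x (A \<union> B)" "insert x A \<inter> insert x B = insert x (A \<inter> B)"
      using xA by auto
    show "?g1 A * ?g2 B \<le> ?g3 (A \<union> B) * ?g4 (A \<inter> B)"
    proof (rule ad2)
      show "f1 A * f2 B \<le> f3 (A \<union> B) * f4 (A \<inter> B)" using insert.prems(5)[OF s(1,2)] .
      show "f1 A * f2 (insert x B) \<le> f3 (insert x (A \<union> B)) * f4 (A \<inter> B)"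
        using insert.prems(5)[OF s(1,4)] e1 by simp
      show "f1 (insert x A) * f2 B \<le> f3 (insert x (A \<union> B)) * f4 (A \<inter> B)"
        using insert.prems(5)[OF s(3,2)] e1 by simp
      show "f1 (insert x A) * f2 (insert x B) \<le> f3 (insert x (A \<union> B)) * f4 (insert x (A \<inter> B))"
        using insert.prems(5)[OF s(3,4)] e1 by simp
    qed (use insert.prems s in auto)
  qed
  then show ?case unfolding sum_Pow_insert[OF insert.hyps(1,2), of f1] sum_Pow_insert[OF insert.hyps(1,2), of f2]
    sum_Pow_insert[OF insert.hyps(1,2), of f3] sum_Pow_insert[OF insert.hyps(1,2), of f4] .
qed

theorem fkg_pow:
  fixes \<mu> F G :: "'a set \<Rightarrow> real"
  assumes "finite X"
    and mu0: "\<And>A. A \<subseteq> X \<Longrightarrow> 0 \<le> \<mu> A"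
    and F0: "\<And>A. A \<subseteq> X \<Longrightarrow> 0 \<le> F A" and G0: "\<And>A. A \<subseteq> X \<Longrightarrow> 0 \<le> G A"
    and lat: "\<And>A B. A \<subseteq> X \<Longrightarrow> B \<subseteq> X \<Longrightarrow> \<mu> A * \<mu> B \<le> \<mu> (A \<union> B) * \<mu> (A \<inter> B)"
    and Fm: "\<And>A B. A \<subseteq> B \<Longrightarrow> B \<subseteq> X \<Longrightarrow> F A \<le> F B"
    and Gm: "\<And>A B. A \<subseteq> B \<Longrightarrow> B \<subseteq> X \<Longrightarrow> G A \<le> G B"
  shows "(\<Sum>A\<in>Pow X. \<mu> A * F A) * (\<Sum>A\<in>Pow X. \<mu> A * G A)
     \<le> (\<Sum>A\<in>Pow X. \<mu> A * (F A * G A)) * (\<Sum>A\<in>Pow X. \<mu> A)"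
proof (rule four_functions[OF assms(1)])
  fix A B assume AB: "A \<subseteq> X" "B \<subseteq> X"
  then have U: "A \<union> B \<subseteq> X" "A \<inter> B \<subseteq> X" by auto
  have "(\<mu> A * \<mu> B) * (F A * G B) \<le> (\<mu> (A \<union> B) * \<mu> (A \<inter> B)) * (F (A \<union> B) * G (A \<union> B))"
    apply (rule mult_mono)
       apply (rule lat[OF AB])
      apply (rule mult_mono)
    using AB U Fm Gm F0 G0 mu0 by (auto intro: mult_nonneg_nonneg)
  then show "\<mu> A * F A * (\<mu> B * G B) \<le> \<mu> (A \<union> B) * (F (A \<union> B) * G (A \<union> B)) * \<mu> (A \<inter> B)"
    by (simp add: algebra_simps)
qed (use mu0 F0 G0 in auto)




definition grel :: "'e set \<Rightarrow> ('e \<Rightarrow> 'v) \<Rightarrow> ('e \<Rightarrow> 'v) \<Rightarrow> ('v \<times> 'v) set" where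
  "grel W p q = {(p e, q e) |e. e \<in> W} \<union> {(q e, p e) |e. e \<in> W}"

definition gcls :: "'e set \<Rightarrow> ('e \<Rightarrow> 'v) \<Rightarrow> ('e \<Rightarrow> 'v) \<Rightarrow> 'v \<Rightarrow> 'v set" where
  "gcls W p q u = (grel W p q)\<^sup>* `` {u}"

definition gclasses :: "'v set \<Rightarrow> 'e set \<Rightarrow> ('e \<Rightarrow> 'v) \<Rightarrow> ('e \<Rightarrow> 'v) \<Rightarrow> 'v set set" where
  "gclasses V W p q = gcls W p q ` V"

definition gcomp :: "'v set \<Rightarrow> 'a set \<Rightarrow> 'e set \<Rightarrow> ('e \<Rightarrow> 'v) \<Rightarrow> ('e \<Rightarrow> 'v) \<Rightarrow> ('v \<Rightarrow> 'a) set" where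
  "gcomp V Q W p q = {\<sigma> \<in> V \<rightarrow>\<^sub>E Q. \<forall>e\<in>W. \<sigma> (p e) = \<sigma> (q e)}"

lemma grel_sym: "sym (grel W p q)"
  unfolding grel_def sym_def by blast

lemma grel_star_sym: "(x, y) \<in> (grel W p q)\<^sup>* \<Longrightarrow> (y, x) \<in> (grel W p q)\<^sup>*"
  by (metis sym_rtrancl grel_sym symD)

lemma gcls_self: "u \<in> gcls W p q u"
  unfolding gcls_def by simp

lemma gcls_sub:
  assumes "\<forall>e\<in>W. p e \<in> V \<and> q e \<in> V" "u \<in> V"
  shows "gcls W p q u \<subseteq> V"
proof
  fix y assume "y \<in> gcls W p q u"
  then have "(u, y) \<in> (grel W p q)\<^sup>*" unfolding gcls_def by simp
  then show "y \<in> V"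
    by (induction rule: rtrancl_induct) (use assms in \<open>auto simp: grel_def\<close>)
qed

lemma gcls_eq:
  assumes "v \<in> gcls W p q u"
  shows "gcls W p q v = gcls W p q u"
proof -
  have uv: "(u, v) \<in> (grel W p q)\<^sup>*" using assms unfolding gcls_def by simp
  then have vu: "(v, u) \<in> (grel W p q)\<^sup>*" by (rule grel_star_sym)
  show ?thesis unfolding gcls_def
    using uv vu by (auto intro: rtrancl_trans)
qed

lemma gcls_eq_iff: "gcls W p q v = gcls W p q u \<longleftrightarrow> v \<in> gcls W p q u"
  using gcls_eq gcls_self by metis

lemma gcomp_resp:
  assumes "\<sigma> \<in> gcomp V Q W p q" "v \<in> gcls W p q u"
  shows "\<sigma> v = \<sigma> u"
proof -
  have "(u, v) \<in> (grel W p q)\<^sup>*" using assms unfolding gcls_def by simp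
  then show ?thesis
    by (induction rule: rtrancl_induct) (use assms(1) in \<open>auto simp: grel_def gcomp_def\<close>)
qed

lemma gcomp_bij:
  assumes W: "\<forall>e\<in>W. p e \<in> V \<and> q e \<in> V"
  shows "bij_betw (\<lambda>\<tau>. \<lambda>u\<in>V. \<tau> (gcls W p q u)) (gclasses V W p q \<rightarrow>\<^sub>E Q) (gcomp V Q W p q)"
  unfolding bij_betw_def
proof
  show "inj_on (\<lambda>\<tau>. \<lambda>u\<in>V. \<tau> (gcls W p q u)) (gclasses V W p q \<rightarrow>\<^sub>E Q)"
  proof (rule inj_onI)
    fix \<tau>1 \<tau>2 assume t: "\<tau>1 \<in> gclasses V W p q \<rightarrow>\<^sub>E Q" "\<tau>2 \<in> gclasses V W p q \<rightarrow>\<^sub>E Q"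
      and eq: "(\<lambda>u\<in>V. \<tau>1 (gcls W p q u)) = (\<lambda>u\<in>V. \<tau>2 (gcls W p q u))"
    show "\<tau>1 = \<tau>2"
    proof
      fix C
      show "\<tau>1 C = \<tau>2 C"
      proof (cases "C \<in> gclasses V W p q")
        case True
        then obtain u where u: "u \<in> V" "C = gcls W p q u" unfolding gclasses_def by auto
        then show ?thesis using fun_cong[OF eq, of u] by simp
      next
        case False
        then show ?thesis using t by (simp add: PiE_def extensional_def)
      qed
    qed
  qed
next
  show "(\<lambda>\<tau>. \<lambda>u\<in>V. \<tau> (gcls W p q u)) ` (gclasses V W p q \<rightarrow>\<^sub>E Q) = gcomp V Q W p q"
  proof (intro equalityI subsetI)
    fix \<sigma> assume "\<sigma> \<in> (\<lambda>\<tau>. \<lambda>u\<in>V. \<tau> (gcls W p q u)) ` (gclasses V W p q \<rightarrow>\<^sub>E Q)"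
    then obtain \<tau> where t: "\<tau> \<in> gclasses V W p q \<rightarrow>\<^sub>E Q" and s: "\<sigma> = (\<lambda>u\<in>V. \<tau> (gcls W p q u))" by auto
    have "\<sigma> \<in> V \<rightarrow>\<^sub>E Q" using t unfolding s gclasses_def by auto
    moreover have "\<forall>e\<in>W. \<sigma> (p e) = \<sigma> (q e)"
    proof
      fix e assume e: "e \<in> W"
      have "q e \<in> gcls W p q (p e)" unfolding gcls_def grel_def using e by auto
      then have "gcls W p q (q e) = gcls W p q (p e)" by (rule gcls_eq)
      then show "\<sigma> (p e) = \<sigma> (q e)" using W e unfolding s by simp
    qed
    ultimately show "\<sigma> \<in> gcomp V Q W p q" unfolding gcomp_def by simp
  next
    fix \<sigma> assume s: "\<sigma> \<in> gcomp V Q W p q"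
    define \<tau> where "\<tau> = (\<lambda>C\<in>gclasses V W p q. \<sigma> (SOME u. u \<in> V \<and> C = gcls W p q u))"
    have "\<tau> \<in> gclasses V W p q \<rightarrow>\<^sub>E Q"
    proof
      fix C assume "C \<in> gclasses V W p q"
      then have "\<exists>u. u \<in> V \<and> C = gcls W p q u" unfolding gclasses_def by auto
      then have "(SOME u. u \<in> V \<and> C = gcls W p q u) \<in> V" by (metis (mono_tags, lifting) someI_ex)
      then show "\<tau> C \<in> Q" using \<open>C \<in> gclasses V W p q\<close> s unfolding \<tau>_def gcomp_def by auto
    next
      fix C assume "C \<notin> gclasses V W p q"
      then show "\<tau> C = undefined" unfolding \<tau>_def by simp
    qed
    moreover have "\<sigma> = (\<lambda>u\<in>V. \<tau> (gcls W p q u))"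
    proof
      fix u
      show "\<sigma> u = (\<lambda>u\<in>V. \<tau> (gcls W p q u)) u"
      proof (cases "u \<in> V")
        case True
        let ?w = "SOME w. w \<in> V \<and> gcls W p q u = gcls W p q w"
        have ex: "\<exists>w. w \<in> V \<and> gcls W p q u = gcls W p q w" using True by auto
        have w: "?w \<in> V" "gcls W p q u = gcls W p q ?w" using someI_ex[OF ex] by auto
        have "u \<in> gcls W p q ?w" using w(2) gcls_self by metis
        then have "\<sigma> u = \<sigma> ?w" by (rule gcomp_resp[OF s])
        then show ?thesis using True unfolding \<tau>_def gclasses_def by auto
      next
        case False
        then show ?thesis using s unfolding gcomp_def by (auto simp: PiE_def extensional_def)
      qed
    qed
    ultimately show "\<sigma> \<in> (\<lambda>\<tau>. \<lambda>u\<in>V. \<tau> (gcls W p q u)) ` (gclasses V W p q \<rightarrow>\<^sub>E Q)" by blast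
  qed
qed

lemma card_gcomp:
  assumes "\<forall>e\<in>W. p e \<in> V \<and> q e \<in> V" "finite V"
  shows "card (gcomp V Q W p q) = card Q ^ card (gclasses V W p q)"
proof -
  have "card (gcomp V Q W p q) = card (gclasses V W p q \<rightarrow>\<^sub>E Q)"
    using bij_betw_same_card[OF gcomp_bij[OF assms(1), where Q=Q]] by simp
  also have "\<dots> = card Q ^ card (gclasses V W p q)"
    using assms(2) unfolding gclasses_def by (simp add: card_PiE)
  finally show ?thesis .
qed

lemma sum_gcomp:
  fixes Q :: "'a::comm_semiring_1 set" and k :: nat
  assumes W: "\<forall>e\<in>W. p e \<in> V \<and> q e \<in> V" and fin: "finite V" "finite Q"
    and v: "\<forall>i<k. v i \<in> V"
  shows "(\<Sum>\<sigma>\<in>gcomp V Q W p q. \<Prod>i<k. \<sigma> (v i) ^ m i)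
     = (\<Prod>C\<in>gclasses V W p q. \<Sum>x\<in>Q. x ^ (\<Sum>i\<in>{i. i < k \<and> gcls W p q (v i) = C}. m i))"
proof -
  let ?f = "\<lambda>\<tau>. \<lambda>u\<in>V. \<tau> (gcls W p q u)"
  let ?Cl = "gclasses V W p q"
  have finCl: "finite ?Cl" using fin unfolding gclasses_def by simp
  have "(\<Sum>\<sigma>\<in>gcomp V Q W p q. \<Prod>i<k. \<sigma> (v i) ^ m i) = (\<Sum>\<tau>\<in>?Cl \<rightarrow>\<^sub>E Q. \<Prod>i<k. ?f \<tau> (v i) ^ m i)"
    using sum.reindex_bij_betw[OF gcomp_bij[OF W, where Q=Q], of "\<lambda>\<sigma>. \<Prod>i<k. \<sigma> (v i) ^ m i"] by simp
  also have "\<dots> = (\<Sum>\<tau>\<in>?Cl \<rightarrow>\<^sub>E Q. \<Prod>C\<in>?Cl. \<tau> C ^ (\<Sum>i\<in>{i. i < k \<and> gcls W p q (v i) = C}. m i))"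
  proof (rule sum.cong[OF refl])
    fix \<tau> assume "\<tau> \<in> ?Cl \<rightarrow>\<^sub>E Q"
    have "(\<Prod>i<k. ?f \<tau> (v i) ^ m i) = (\<Prod>i<k. \<tau> (gcls W p q (v i)) ^ m i)"
      using v by simp
    also have "\<dots> = (\<Prod>C\<in>?Cl. \<Prod>i\<in>{i. i \<in> {..<k} \<and> gcls W p q (v i) = C}. \<tau> (gcls W p q (v i)) ^ m i)"
      by (rule prod.group[symmetric]) (use finCl v in \<open>auto simp: gclasses_def\<close>)
    also have "\<dots> = (\<Prod>C\<in>?Cl. \<tau> C ^ (\<Sum>i\<in>{i. i < k \<and> gcls W p q (v i) = C}. m i))"
      by (rule prod.cong[OF refl]) (simp add: power_sum)
    finally show "(\<Prod>i<k. ?f \<tau> (v i) ^ m i) = (\<Prod>C\<in>?Cl. \<tau> C ^ (\<Sum>i\<in>{i. i < k \<and> gcls W p q (v i) = C}. m i))" .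
  qed
  also have "\<dots> = (\<Prod>C\<in>?Cl. \<Sum>x\<in>Q. x ^ (\<Sum>i\<in>{i. i < k \<and> gcls W p q (v i) = C}. m i))"
    by (rule prod_sum_PiE[symmetric]) (use finCl fin in auto)
  finally show ?thesis .
qed




lemma grel_mono: "W \<subseteq> W' \<Longrightarrow> grel W p q \<subseteq> grel W' p q"
  unfolding grel_def by blast

lemma grel_star_mono: "W \<subseteq> W' \<Longrightarrow> (grel W p q)\<^sup>* \<subseteq> (grel W' p q)\<^sup>*"
  by (rule rtrancl_mono[OF grel_mono])

lemma gcls_mono: "W \<subseteq> W' \<Longrightarrow> gcls W p q u \<subseteq> gcls W' p q u"
  unfolding gcls_def using grel_star_mono by blast

lemma grel_insert: "grel (insert e W) p q = grel W p q \<union> {(p e, q e), (q e, p e)}"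
  unfolding grel_def by blast

lemma gclasses_insert_conn:
  assumes "q e \<in> gcls W p q (p e)"
  shows "gclasses V (insert e W) p q = gclasses V W p q"
proof -
  have pq: "(p e, q e) \<in> (grel W p q)\<^sup>*" using assms unfolding gcls_def by simp
  have "(grel (insert e W) p q)\<^sup>* = (grel W p q)\<^sup>*"
  proof (rule rtrancl_subset)
    show "grel W p q \<subseteq> grel (insert e W) p q" by (rule grel_mono) auto
    show "grel (insert e W) p q \<subseteq> (grel W p q)\<^sup>*"
      unfolding grel_insert using pq grel_star_sym[OF pq] by auto
  qed
  then show ?thesis unfolding gclasses_def gcls_def by simp
qed

lemma gcls_other:
  assumes "u \<in> gcls W p q x"
  shows "(grel W p q)\<^sup>* `` {u} = gcls W p q x"
  using gcls_eq[OF assms] unfolding gcls_def by simp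

lemma gclasses_insert_unconn:
  assumes EV: "\<forall>e\<in>W. p e \<in> V \<and> q e \<in> V" and fin: "finite V"
    and e: "p e \<in> V" "q e \<in> V" and nc: "q e \<notin> gcls W p q (p e)"
  shows "int (card (gclasses V (insert e W) p q)) = int (card (gclasses V W p q)) - 1"
proof -
  define R where "R = (grel W p q)\<^sup>*"
  define Cp where "Cp = gcls W p q (p e)"
  define Cq where "Cq = gcls W p q (q e)"
  define T where "T = R \<union> (Cp \<union> Cq) \<times> (Cp \<union> Cq)"
  have clsR: "\<And>u. gcls W p q u = R `` {u}" unfolding gcls_def R_def by simp
  have Rsym: "\<And>x y. (x, y) \<in> R \<Longrightarrow> (y, x) \<in> R" unfolding R_def by (rule grel_star_sym)
  have closed: "\<And>x y. (x, y) \<in> R \<Longrightarrow> x \<in> Cp \<union> Cq \<Longrightarrow> y \<in> Cp \<union> Cq"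
  proof -
    fix x y assume xy: "(x, y) \<in> R" and x: "x \<in> Cp \<union> Cq"
    have "y \<in> gcls W p q x" using xy clsR by auto
    moreover have "gcls W p q x = Cp \<or> gcls W p q x = Cq"
      using x gcls_eq[of x W p q "p e"] gcls_eq[of x W p q "q e"] unfolding Cp_def Cq_def by blast
    ultimately show "y \<in> Cp \<union> Cq" by auto
  qed
  have RT: "(grel (insert e W) p q)\<^sup>* = T"
  proof (intro equalityI subsetI)
    fix z assume "z \<in> (grel (insert e W) p q)\<^sup>*"
    then obtain x y where z: "z = (x, y)" and xy: "(x, y) \<in> (grel (insert e W) p q)\<^sup>*" by (cases z) auto
    from xy have "(x, y) \<in> T"
    proof (induction rule: rtrancl_induct)
      case base then show ?case unfolding T_def R_def by simp
    next
      case (step y z)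
      from step.hyps(2) consider "(y, z) \<in> grel W p q" | "y \<in> Cp \<union> Cq" "z \<in> Cp \<union> Cq"
        using gcls_self[of "p e" W p q] gcls_self[of "q e" W p q] unfolding grel_insert Cp_def Cq_def by blast
      then show ?case
      proof cases
        case 1
        then have yz: "(y, z) \<in> R" unfolding R_def by auto
        from step.IH show ?thesis
        proof (cases "(x, y) \<in> R")
          case True then show ?thesis using yz unfolding T_def R_def by (meson UnI1 rtrancl_trans)
        next
          case False
          then have "x \<in> Cp \<union> Cq" "y \<in> Cp \<union> Cq" using step.IH unfolding T_def by auto
          then show ?thesis using closed[OF yz] unfolding T_def by auto
        qed
      next
        case 2
        from step.IH show ?thesis
        proof (cases "(x, y) \<in> R")
          case True
          then have "x \<in> Cp \<union> Cq" using closed[OF Rsym[OF True]] 2 by auto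
          then show ?thesis using 2 unfolding T_def by auto
        next
          case False
          then have "x \<in> Cp \<union> Cq" using step.IH unfolding T_def by auto
          then show ?thesis using 2 unfolding T_def by auto
        qed
      qed
    qed
    then show "z \<in> T" using z by simp
  next
    fix z assume zT: "z \<in> T"
    let ?R' = "(grel (insert e W) p q)\<^sup>*"
    have RR: "R \<subseteq> ?R'" unfolding R_def by (rule grel_star_mono) auto
    have pq: "(p e, q e) \<in> ?R'" unfolding grel_insert by auto
    have inC: "\<And>x. x \<in> Cp \<union> Cq \<Longrightarrow> (x, p e) \<in> ?R'"
    proof -
      fix x assume "x \<in> Cp \<union> Cq"
      then show "(x, p e) \<in> ?R'"
      proof
        assume "x \<in> Cp"
        then have "(x, p e) \<in> R" using Rsym clsR unfolding Cp_def by auto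
        then show ?thesis using RR by auto
      next
        assume "x \<in> Cq"
        then have "(x, q e) \<in> R" using Rsym clsR unfolding Cq_def by auto
        then have "(x, q e) \<in> ?R'" using RR by auto
        then show ?thesis using grel_star_sym[OF pq] by (meson rtrancl_trans)
      qed
    qed
    show "z \<in> ?R'"
    proof (cases "z \<in> R")
      case True then show ?thesis using RR by auto
    next
      case False
      then obtain x y where z: "z = (x, y)" "x \<in> Cp \<union> Cq" "y \<in> Cp \<union> Cq" using zT unfolding T_def by auto
      show ?thesis using inC[OF z(2)] grel_star_sym[OF inC[OF z(3)]] z(1) by (meson rtrancl_trans)
    qed
  qed
  have clsnew: "\<And>u. gcls (insert e W) p q u = (if u \<in> Cp \<union> Cq then Cp \<union> Cq else gcls W p q u)"
  proof -
    fix u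
    show "gcls (insert e W) p q u = (if u \<in> Cp \<union> Cq then Cp \<union> Cq else gcls W p q u)"
    proof (cases "u \<in> Cp \<union> Cq")
      case True
      have "R `` {u} \<subseteq> Cp \<union> Cq" using closed True by auto
      then show ?thesis using True unfolding gcls_def RT T_def by auto
    next
      case False
      then show ?thesis unfolding gcls_def RT T_def R_def by auto
    qed
  qed
  have pCp: "p e \<in> Cp" and qCq: "q e \<in> Cq" unfolding Cp_def Cq_def by (rule gcls_self)+
  have CpCq: "Cp \<noteq> Cq" using nc qCq unfolding Cp_def by auto
  have inCl: "Cp \<in> gclasses V W p q" "Cq \<in> gclasses V W p q"
    unfolding gclasses_def Cp_def Cq_def using e by auto
  have notin: "Cp \<union> Cq \<notin> gclasses V W p q - {Cp, Cq}"
  proof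
    assume "Cp \<union> Cq \<in> gclasses V W p q - {Cp, Cq}"
    then obtain u where u: "u \<in> V" "Cp \<union> Cq = gcls W p q u" "Cp \<union> Cq \<noteq> Cp" unfolding gclasses_def by auto
    have "p e \<in> gcls W p q u" using u(2) pCp by auto
    then have "Cp = gcls W p q u" unfolding Cp_def by (rule gcls_eq)
    then show False using u by auto
  qed
  have new: "gclasses V (insert e W) p q = insert (Cp \<union> Cq) (gclasses V W p q - {Cp, Cq})"
  proof (intro equalityI subsetI)
    fix C assume "C \<in> gclasses V (insert e W) p q"
    then obtain u where u: "u \<in> V" "C = gcls (insert e W) p q u" unfolding gclasses_def by auto
    show "C \<in> insert (Cp \<union> Cq) (gclasses V W p q - {Cp, Cq})"
    proof (cases "u \<in> Cp \<union> Cq")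
      case True then show ?thesis using u clsnew by simp
    next
      case False
      then have "gcls W p q u \<noteq> Cp" "gcls W p q u \<noteq> Cq" using gcls_self[of u W p q] by auto
      then show ?thesis using u clsnew False unfolding gclasses_def by auto
    qed
  next
    fix C assume C: "C \<in> insert (Cp \<union> Cq) (gclasses V W p q - {Cp, Cq})"
    show "C \<in> gclasses V (insert e W) p q"
    proof (cases "C = Cp \<union> Cq")
      case True
      then show ?thesis using e clsnew[of "p e"] pCp unfolding gclasses_def by (auto intro!: image_eqI[where x="p e"])
    next
      case False
      then obtain u where u: "u \<in> V" "C = gcls W p q u" "C \<noteq> Cp" "C \<noteq> Cq" using C unfolding gclasses_def by auto
      have "u \<notin> Cp \<union> Cq"
      proof
        assume "u \<in> Cp \<union> Cq"
        then show False using u gcls_eq[of u W p q "p e"] gcls_eq[of u W p q "q e"] unfolding Cp_def Cq_def by blast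
      qed
      then show ?thesis using u clsnew unfolding gclasses_def by (auto intro!: image_eqI[where x=u])
    qed
  qed
  have finCl: "finite (gclasses V W p q)" using fin unfolding gclasses_def by simp
  have "card (gclasses V (insert e W) p q) = card (gclasses V W p q - {Cp, Cq}) + 1"
    unfolding new using notin finCl by simp
  also have "card (gclasses V W p q - {Cp, Cq}) = card (gclasses V W p q) - 2"
    using card_Diff_subset[of "{Cp, Cq}" "gclasses V W p q"] inCl CpCq by simp
  finally have "card (gclasses V (insert e W) p q) = card (gclasses V W p q) - 2 + 1" .
  moreover have "card (gclasses V W p q) \<ge> 2"
    using card_mono[OF finCl, of "{Cp, Cq}"] inCl CpCq by simp
  ultimately show ?thesis by simp
qed

lemma gclasses_insert:
  assumes EV: "\<forall>e\<in>W. p e \<in> V \<and> q e \<in> V" and fin: "finite V"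
    and e: "p e \<in> V" "q e \<in> V"
  shows "int (card (gclasses V (insert e W) p q)) = int (card (gclasses V W p q)) - (if q e \<in> gcls W p q (p e) then 0 else 1)"
  using gclasses_insert_conn[where e=e and W=W and p=p and q=q and V=V] gclasses_insert_unconn[OF assms] by auto

lemma kk_incr:
  assumes EV: "\<forall>e\<in>E. p e \<in> V \<and> q e \<in> V" and fin: "finite V"
    and sub: "X \<subseteq> Y" "Y \<subseteq> E"
  shows "finite B \<Longrightarrow> B \<subseteq> E \<Longrightarrow> int (card (gclasses V (X \<union> B) p q)) - int (card (gclasses V X p q))
       \<le> int (card (gclasses V (Y \<union> B) p q)) - int (card (gclasses V Y p q))"
proof (induction B rule: finite_induct)
  case empty then show ?case by simp
next
  case (insert e B)
  have BE: "B \<subseteq> E" "e \<in> E" using insert.prems by auto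
  have eV: "p e \<in> V" "q e \<in> V" using BE(2) EV by auto
  have XB: "X \<union> B \<subseteq> E" "Y \<union> B \<subseteq> E" using BE(1) sub by auto
  have EX: "\<forall>e\<in>X \<union> B. p e \<in> V \<and> q e \<in> V" "\<forall>e\<in>Y \<union> B. p e \<in> V \<and> q e \<in> V"
    using EV XB by blast+
  have i1: "X \<union> insert e B = insert e (X \<union> B)" "Y \<union> insert e B = insert e (Y \<union> B)" by auto
  have XY: "X \<union> B \<subseteq> Y \<union> B" using sub by auto
  have conn: "q e \<in> gcls (X \<union> B) p q (p e) \<Longrightarrow> q e \<in> gcls (Y \<union> B) p q (p e)"
    using gcls_mono[OF XY, of p q "p e"] by blast
  have IH: "int (card (gclasses V (X \<union> B) p q)) - int (card (gclasses V X p q))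
       \<le> int (card (gclasses V (Y \<union> B) p q)) - int (card (gclasses V Y p q))"
    by (rule insert.IH[OF BE(1)])
  have "int (card (gclasses V (insert e (X \<union> B)) p q)) - int (card (gclasses V X p q))
      = int (card (gclasses V (X \<union> B) p q)) - int (card (gclasses V X p q))
        - (if q e \<in> gcls (X \<union> B) p q (p e) then 0 else 1)"
    unfolding gclasses_insert[OF EX(1) fin(1) eV] by simp
  also have "\<dots> \<le> int (card (gclasses V (Y \<union> B) p q)) - int (card (gclasses V Y p q))
        - (if q e \<in> gcls (Y \<union> B) p q (p e) then 0 else 1)"
    using IH conn by (cases "q e \<in> gcls (X \<union> B) p q (p e)") auto
  also have "\<dots> = int (card (gclasses V (insert e (Y \<union> B)) p q)) - int (card (gclasses V Y p q))"
    unfolding gclasses_insert[OF EX(2) fin(1) eV] by simp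
  finally show ?case unfolding i1 .
qed

lemma kk_supermod:
  assumes EV: "\<forall>e\<in>E. p e \<in> V \<and> q e \<in> V" and fin: "finite V" "finite E"
    and AB: "A \<subseteq> E" "B \<subseteq> E"
  shows "card (gclasses V A p q) + card (gclasses V B p q)
       \<le> card (gclasses V (A \<union> B) p q) + card (gclasses V (A \<inter> B) p q)"
proof -
  have "int (card (gclasses V ((A \<inter> B) \<union> B) p q)) - int (card (gclasses V (A \<inter> B) p q))
       \<le> int (card (gclasses V (A \<union> B) p q)) - int (card (gclasses V A p q))"
    using kk_incr[OF EV fin(1), of "A \<inter> B" A B] finite_subset[OF AB(2) fin(2)] AB by auto
  moreover have "(A \<inter> B) \<union> B = B" by auto
  ultimately show ?thesis by simp
qed

lemma card_gcomp_supermod: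
  assumes EV: "\<forall>e\<in>E. p e \<in> V \<and> q e \<in> V" and fin: "finite V" "finite E" and Q: "finite Q" "Q \<noteq> {}"
    and AB: "A \<subseteq> E" "B \<subseteq> E"
  shows "real (card (gcomp V Q A p q)) * real (card (gcomp V Q B p q))
       \<le> real (card (gcomp V Q (A \<union> B) p q)) * real (card (gcomp V Q (A \<inter> B) p q))"
proof -
  have EA: "\<forall>e\<in>A. p e \<in> V \<and> q e \<in> V" "\<forall>e\<in>B. p e \<in> V \<and> q e \<in> V"
    "\<forall>e\<in>A \<union> B. p e \<in> V \<and> q e \<in> V" "\<forall>e\<in>A \<inter> B. p e \<in> V \<and> q e \<in> V" using EV AB by auto
  have q1: "1 \<le> real (card Q)" using Q by (simp add: Suc_leI card_gt_0_iff)
  have "real (card (gcomp V Q A p q)) * real (card (gcomp V Q B p q))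
      = real (card Q) ^ (card (gclasses V A p q) + card (gclasses V B p q))"
    unfolding card_gcomp[OF EA(1) fin(1)] card_gcomp[OF EA(2) fin(1)] by (simp add: power_add)
  also have "\<dots> \<le> real (card Q) ^ (card (gclasses V (A \<union> B) p q) + card (gclasses V (A \<inter> B) p q))"
    by (rule power_increasing[OF kk_supermod[OF EV fin AB] q1])
  also have "\<dots> = real (card (gcomp V Q (A \<union> B) p q)) * real (card (gcomp V Q (A \<inter> B) p q))"
    unfolding card_gcomp[OF EA(3) fin(1)] card_gcomp[OF EA(4) fin(1)] by (simp add: power_add)
  finally show ?thesis .
qed




definition msum :: "real set \<Rightarrow> nat \<Rightarrow> real" where
  "msum Q n = (\<Sum>x\<in>Q. x ^ n)"

definition mM :: "real set \<Rightarrow> nat \<Rightarrow> real" where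
  "mM Q n = msum Q n / real (card Q)"

lemma msum_odd:
  assumes "finite Q" "uminus ` Q = Q" "odd n"
  shows "msum Q n = 0"
proof -
  have "msum Q n = (\<Sum>x\<in>uminus ` Q. x ^ n)" unfolding msum_def using assms(2) by simp
  also have "\<dots> = (\<Sum>x\<in>Q. (- x) ^ n)" by (subst sum.reindex) (auto simp: inj_on_def)
  also have "\<dots> = - msum Q n" unfolding msum_def using assms(3) by (simp add: sum_negf)
  finally show ?thesis by simp
qed

lemma msum_nonneg:
  assumes "finite Q" "uminus ` Q = Q"
  shows "0 \<le> msum Q n"
proof (cases "even n")
  case True
  then show ?thesis unfolding msum_def by (intro sum_nonneg) (simp add: zero_le_even_power)
next
  case False
  then show ?thesis using msum_odd[OF assms] by simp
qed

lemma cheb_term: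
  fixes x y :: real
  assumes "even m" "even n"
  shows "0 \<le> (x ^ m - y ^ m) * (x ^ n - y ^ n)"
proof -
  have e: "x ^ m = \<bar>x\<bar> ^ m" "y ^ m = \<bar>y\<bar> ^ m" "x ^ n = \<bar>x\<bar> ^ n" "y ^ n = \<bar>y\<bar> ^ n"
    using assms by (simp_all add: power_even_abs)
  show ?thesis
  proof (cases "\<bar>x\<bar> \<le> \<bar>y\<bar>")
    case True
    then have "\<bar>x\<bar> ^ m \<le> \<bar>y\<bar> ^ m" "\<bar>x\<bar> ^ n \<le> \<bar>y\<bar> ^ n" by (simp_all add: power_mono)
    then show ?thesis unfolding e by (intro mult_nonpos_nonpos) auto
  next
    case False
    then have "\<bar>y\<bar> ^ m \<le> \<bar>x\<bar> ^ m" "\<bar>y\<bar> ^ n \<le> \<bar>x\<bar> ^ n" by (simp_all add: power_mono)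
    then show ?thesis unfolding e by (intro mult_nonneg_nonneg) auto
  qed
qed

lemma msum_super:
  assumes Q: "finite Q" "uminus ` Q = Q"
  shows "msum Q m * msum Q n \<le> real (card Q) * msum Q (m + n)"
proof (cases "even m \<and> even n")
  case True
  have "0 \<le> (\<Sum>x\<in>Q. \<Sum>y\<in>Q. (x ^ m - y ^ m) * (x ^ n - y ^ n))"
    using True by (intro sum_nonneg cheb_term) auto
  also have "(\<Sum>x\<in>Q. \<Sum>y\<in>Q. (x ^ m - y ^ m) * (x ^ n - y ^ n))
     = (\<Sum>x\<in>Q. \<Sum>y\<in>Q. x ^ (m + n) + y ^ (m + n) - x ^ m * y ^ n - y ^ m * x ^ n)"
    by (simp add: algebra_simps power_add)
  also have "\<dots> = 2 * real (card Q) * msum Q (m + n) - 2 * (msum Q m * msum Q n)"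
  proof -
    have A: "(\<Sum>x\<in>Q. \<Sum>y\<in>Q. x ^ (m + n)) = real (card Q) * msum Q (m + n)"
      unfolding msum_def by (simp add: sum_distrib_left mult.commute)
    have B: "(\<Sum>x\<in>Q. \<Sum>y\<in>Q. y ^ (m + n)) = real (card Q) * msum Q (m + n)"
      unfolding msum_def by simp
    have C: "(\<Sum>x\<in>Q. \<Sum>y\<in>Q. x ^ m * y ^ n) = msum Q m * msum Q n"
      unfolding msum_def by (simp add: sum_product)
    have D: "(\<Sum>x\<in>Q. \<Sum>y\<in>Q. y ^ m * x ^ n) = msum Q m * msum Q n"
      unfolding msum_def sum_product by (subst sum.swap) simp
    have "(\<Sum>x\<in>Q. \<Sum>y\<in>Q. x ^ (m + n) + y ^ (m + n) - x ^ m * y ^ n - y ^ m * x ^ n)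
       = (\<Sum>x\<in>Q. \<Sum>y\<in>Q. x ^ (m + n)) + (\<Sum>x\<in>Q. \<Sum>y\<in>Q. y ^ (m + n))
         - (\<Sum>x\<in>Q. \<Sum>y\<in>Q. x ^ m * y ^ n) - (\<Sum>x\<in>Q. \<Sum>y\<in>Q. y ^ m * x ^ n)"
      by (simp add: sum_subtractf sum.distrib)
    then show ?thesis unfolding A B C D by simp
  qed
  finally show ?thesis by simp
next
  case False
  then have "msum Q m * msum Q n = 0" using msum_odd[OF Q] by auto
  moreover have "0 \<le> real (card Q) * msum Q (m + n)" using msum_nonneg[OF Q] by simp
  ultimately show ?thesis by auto
qed

lemma mM_nonneg: "finite Q \<Longrightarrow> uminus ` Q = Q \<Longrightarrow> 0 \<le> mM Q n"
  unfolding mM_def using msum_nonneg by simp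

lemma mM_0: "finite Q \<Longrightarrow> Q \<noteq> {} \<Longrightarrow> mM Q 0 = 1"
  unfolding mM_def msum_def by simp

lemma mM_super:
  assumes Q: "finite Q" "uminus ` Q = Q" "Q \<noteq> {}"
  shows "mM Q m * mM Q n \<le> mM Q (m + n)"
proof -
  have qp: "real (card Q) > 0" using Q by (simp add: card_gt_0_iff)
  have "mM Q m * mM Q n = (msum Q m * msum Q n) / (real (card Q) * real (card Q))"
    unfolding mM_def by simp
  also have "\<dots> \<le> (real (card Q) * msum Q (m + n)) / (real (card Q) * real (card Q))"
    by (rule divide_right_mono[OF msum_super[OF Q(1,2)]]) simp
  also have "\<dots> = mM Q (m + n)" unfolding mM_def using qp by simp
  finally show ?thesis .
qed

lemma mM_prod:
  assumes Q: "finite Q" "uminus ` Q = Q" "Q \<noteq> {}" and J: "finite J"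
  shows "(\<Prod>j\<in>J. mM Q (n j)) \<le> mM Q (\<Sum>j\<in>J. n j)"
  using J
proof (induction J rule: finite_induct)
  case empty then show ?case using mM_0[OF Q(1,3)] by simp
next
  case (insert x J)
  have "(\<Prod>j\<in>insert x J. mM Q (n j)) = mM Q (n x) * (\<Prod>j\<in>J. mM Q (n j))" using insert by simp
  also have "\<dots> \<le> mM Q (n x) * mM Q (\<Sum>j\<in>J. n j)"
    by (rule mult_left_mono[OF insert.IH mM_nonneg[OF Q(1,2)]])
  also have "\<dots> \<le> mM Q (n x + (\<Sum>j\<in>J. n j))" by (rule mM_super[OF Q])
  also have "\<dots> = mM Q (\<Sum>j\<in>insert x J. n j)" using insert by simp
  finally show ?case .
qed

definition gg :: "'v set \<Rightarrow> 'e set \<Rightarrow> ('e \<Rightarrow> 'v) \<Rightarrow> ('e \<Rightarrow> 'v) \<Rightarrow> real set \<Rightarrow> nat \<Rightarrow> (nat \<Rightarrow> 'v) \<Rightarrow> (nat \<Rightarrow> nat) \<Rightarrow> real" where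
  "gg V W p q Q k v m = (\<Prod>C\<in>gclasses V W p q. mM Q (\<Sum>i\<in>{i. i < k \<and> gcls W p q (v i) = C}. m i))"

lemma gg_nonneg: "finite Q \<Longrightarrow> uminus ` Q = Q \<Longrightarrow> 0 \<le> gg V W p q Q k v m"
  unfolding gg_def by (intro prod_nonneg) (simp add: mM_nonneg)

lemma gg_zero: "finite Q \<Longrightarrow> Q \<noteq> {} \<Longrightarrow> gg V W p q Q k v (\<lambda>_. 0) = 1"
  unfolding gg_def by (simp add: mM_0)

lemma gg_mult:
  assumes Q: "finite Q" "uminus ` Q = Q" "Q \<noteq> {}"
  shows "gg V W p q Q k v r * gg V W p q Q k v s \<le> gg V W p q Q k v (\<lambda>i. r i + s i)"
  unfolding gg_def prod.distrib[symmetric] sum.distrib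
  by (intro prod_mono conjI mult_nonneg_nonneg mM_nonneg[OF Q(1,2)] mM_super[OF Q])

lemma sum_gcomp_gg:
  assumes W: "\<forall>e\<in>W. p e \<in> V \<and> q e \<in> V" and fin: "finite V" "finite Q"
    and v: "\<forall>i<k. v i \<in> V"
  shows "(\<Sum>\<sigma>\<in>gcomp V Q W p q. \<Prod>i<k. \<sigma> (v i) ^ m i)
     = real (card (gcomp V Q W p q)) * gg V W p q Q k v m"
proof -
  have "(\<Sum>\<sigma>\<in>gcomp V Q W p q. \<Prod>i<k. \<sigma> (v i) ^ m i)
     = (\<Prod>C\<in>gclasses V W p q. msum Q (\<Sum>i\<in>{i. i < k \<and> gcls W p q (v i) = C}. m i))"
    unfolding msum_def by (rule sum_gcomp[OF W fin v])
  also have "\<dots> = (\<Prod>C\<in>gclasses V W p q. real (card Q) * mM Q (\<Sum>i\<in>{i. i < k \<and> gcls W p q (v i) = C}. m i))"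
  proof (cases "Q = {}")
    case True then show ?thesis unfolding msum_def mM_def by simp
  next
    case False then show ?thesis unfolding mM_def using fin by (simp add: card_gt_0_iff)
  qed
  also have "\<dots> = real (card Q) ^ card (gclasses V W p q) * gg V W p q Q k v m"
    unfolding gg_def prod.distrib by simp
  also have "\<dots> = real (card (gcomp V Q W p q)) * gg V W p q Q k v m"
    unfolding card_gcomp[OF W fin(1)] by simp
  finally show ?thesis .
qed

lemma gg_mono:
  assumes EV: "\<forall>e\<in>E. p e \<in> V \<and> q e \<in> V" and fin: "finite V"
    and Q: "finite Q" "uminus ` Q = Q" "Q \<noteq> {}"
    and v: "\<forall>i<k. v i \<in> V"
    and sub: "W \<subseteq> W'" "W' \<subseteq> E"
  shows "gg V W p q Q k v m \<le> gg V W' p q Q k v m"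
proof -
  let ?R' = "(grel W' p q)\<^sup>*"
  define \<phi> where "\<phi> C = ?R' `` C" for C
  let ?Cl = "gclasses V W p q"
  let ?Cl' = "gclasses V W' p q"
  let ?m = "\<lambda>W C. \<Sum>i\<in>{i. i < k \<and> gcls W p q (v i) = C}. m i"
  have phi: "\<phi> (gcls W p q u) = gcls W' p q u" for u
  proof
    show "\<phi> (gcls W p q u) \<subseteq> gcls W' p q u"
    proof
      fix y assume "y \<in> \<phi> (gcls W p q u)"
      then obtain x where x: "(u, x) \<in> (grel W p q)\<^sup>*" "(x, y) \<in> ?R'" unfolding \<phi>_def gcls_def by auto
      have "(u, x) \<in> ?R'" using x(1) grel_star_mono[OF sub(1)] by auto
      then show "y \<in> gcls W' p q u" using x(2) unfolding gcls_def by (auto intro: rtrancl_trans)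
    qed
  next
    show "gcls W' p q u \<subseteq> \<phi> (gcls W p q u)"
      using gcls_self[of u W p q] unfolding \<phi>_def gcls_def by auto
  qed
  have finCl: "finite ?Cl" "finite ?Cl'" using fin unfolding gclasses_def by auto
  have img: "\<phi> ` ?Cl \<subseteq> ?Cl'" unfolding gclasses_def using phi by auto
  have "gg V W p q Q k v m = (\<Prod>C'\<in>?Cl'. \<Prod>C\<in>{C. C \<in> ?Cl \<and> \<phi> C = C'}. mM Q (?m W C))"
    unfolding gg_def by (rule prod.group[symmetric, OF finCl img])
  also have "\<dots> \<le> (\<Prod>C'\<in>?Cl'. mM Q (\<Sum>C\<in>{C. C \<in> ?Cl \<and> \<phi> C = C'}. ?m W C))"
    by (intro prod_mono conjI prod_nonneg mM_nonneg[OF Q(1,2)] mM_prod[OF Q]) (use finCl in auto)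
  also have "\<dots> = (\<Prod>C'\<in>?Cl'. mM Q (?m W' C'))"
  proof (rule prod.cong[OF refl])
    fix C' assume C': "C' \<in> ?Cl'"
    let ?S = "{i. i < k \<and> gcls W' p q (v i) = C'}"
    let ?T = "{C. C \<in> ?Cl \<and> \<phi> C = C'}"
    have "(\<Sum>C\<in>?T. \<Sum>i\<in>{i. i \<in> ?S \<and> gcls W p q (v i) = C}. m i) = (\<Sum>i\<in>?S. m i)"
      by (rule sum.group) (use finCl v phi in \<open>auto simp: gclasses_def\<close>)
    moreover have "\<And>C. C \<in> ?T \<Longrightarrow> {i. i \<in> ?S \<and> gcls W p q (v i) = C} = {i. i < k \<and> gcls W p q (v i) = C}"
      using phi by auto
    ultimately have "(\<Sum>C\<in>?T. ?m W C) = ?m W' C'" by simp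
    then show "mM Q (\<Sum>C\<in>?T. ?m W C) = mM Q (?m W' C')" by simp
  qed
  also have "\<dots> = gg V W' p q Q k v m" unfolding gg_def ..
  finally show ?thesis .
qed




definition phi :: "real \<Rightarrow> real \<Rightarrow> bool \<Rightarrow> bool \<Rightarrow> real" where
  "phi a b A B = (if A then a + (1 - a - b) * of_bool B else 0) + (if B then b else 0)"

definition wt :: "'e set \<Rightarrow> real \<Rightarrow> real \<Rightarrow> 'e set \<Rightarrow> 'e set \<Rightarrow> real" where
  "wt E a b \<omega> \<zeta> = a ^ card \<zeta> * (1 - a - b) ^ card (\<omega> - \<zeta>) * b ^ card (E - \<omega>)"

lemma prod_if_zero:
  fixes h :: "'a \<Rightarrow> real"
  assumes "finite A"
  shows "(\<Prod>e\<in>A. if P e then h e else 0) = of_bool (\<forall>e\<in>A. P e) * (\<Prod>e\<in>A. h e)"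
proof (cases "\<forall>e\<in>A. P e")
  case True then show ?thesis by simp
next
  case False
  then obtain e where "e \<in> A" "\<not> P e" by auto
  then have "(\<Prod>e\<in>A. if P e then h e else 0) = 0" using assms by (intro prod_zero) auto
  then show ?thesis using False by simp
qed

lemma expand_phi:
  assumes fin: "finite E"
  shows "(\<Prod>e\<in>E. phi a b (A e) (B e))
    = (\<Sum>\<omega>\<in>Pow E. \<Sum>\<zeta>\<in>Pow \<omega>. wt E a b \<omega> \<zeta> * of_bool (\<forall>e\<in>\<omega>. A e) * of_bool (\<forall>e\<in>E - \<zeta>. B e))"
proof -
  let ?c = "1 - a - b"
  have "(\<Prod>e\<in>E. phi a b (A e) (B e))
      = (\<Prod>e\<in>E. (if A e then a + ?c * of_bool (B e) else 0) + (if B e then b else 0))"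
    unfolding phi_def ..
  also have "\<dots> = (\<Sum>\<omega>\<in>Pow E. (\<Prod>e\<in>\<omega>. if A e then a + ?c * of_bool (B e) else 0) * (\<Prod>e\<in>E - \<omega>. if B e then b else 0))"
    by (rule prod_add[OF fin])
  also have "\<dots> = (\<Sum>\<omega>\<in>Pow E. \<Sum>\<zeta>\<in>Pow \<omega>. wt E a b \<omega> \<zeta> * of_bool (\<forall>e\<in>\<omega>. A e) * of_bool (\<forall>e\<in>E - \<zeta>. B e))"
  proof (rule sum.cong[OF refl])
    fix \<omega> assume "\<omega> \<in> Pow E"
    then have om: "\<omega> \<subseteq> E" by auto
    have fo: "finite \<omega>" using finite_subset[OF om fin] .
    have p2: "(\<Prod>e\<in>E - \<omega>. if B e then b else 0) = of_bool (\<forall>e\<in>E - \<omega>. B e) * b ^ card (E - \<omega>)"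
      using prod_if_zero[of "E - \<omega>" B "\<lambda>_. b"] fin by simp
    have p1: "(\<Prod>e\<in>\<omega>. if A e then a + ?c * of_bool (B e) else 0)
        = of_bool (\<forall>e\<in>\<omega>. A e) * (\<Prod>e\<in>\<omega>. ?c * of_bool (B e) + a)"
      using prod_if_zero[OF fo, of A "\<lambda>e. a + ?c * of_bool (B e)"] by (simp add: add.commute)
    have p3: "(\<Prod>e\<in>\<omega>. ?c * of_bool (B e) + a)
        = (\<Sum>\<xi>\<in>Pow \<omega>. (\<Prod>e\<in>\<xi>. ?c * of_bool (B e)) * (\<Prod>e\<in>\<omega> - \<xi>. a))"
      by (rule prod_add[OF fo])
    also have "\<dots> = (\<Sum>\<xi>\<in>Pow \<omega>. of_bool (\<forall>e\<in>\<xi>. B e) * ?c ^ card \<xi> * a ^ card (\<omega> - \<xi>))"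
    proof (rule sum.cong[OF refl])
      fix \<xi> assume "\<xi> \<in> Pow \<omega>"
      then have fx: "finite \<xi>" using finite_subset fo by auto
      have "(\<Prod>e\<in>\<xi>. ?c * of_bool (B e)) = (\<Prod>e\<in>\<xi>. if B e then ?c else 0)" by (rule prod.cong) auto
      also have "\<dots> = of_bool (\<forall>e\<in>\<xi>. B e) * ?c ^ card \<xi>"
        using prod_if_zero[OF fx, of B "\<lambda>_. ?c"] by simp
      finally show "(\<Prod>e\<in>\<xi>. ?c * of_bool (B e)) * (\<Prod>e\<in>\<omega> - \<xi>. a)
          = of_bool (\<forall>e\<in>\<xi>. B e) * ?c ^ card \<xi> * a ^ card (\<omega> - \<xi>)" by simp
    qed
    also have "\<dots> = (\<Sum>\<zeta>\<in>Pow \<omega>. of_bool (\<forall>e\<in>\<omega> - \<zeta>. B e) * ?c ^ card (\<omega> - \<zeta>) * a ^ card (\<omega> - (\<omega> - \<zeta>)))"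
      by (rule sum.reindex_bij_witness[where i = "\<lambda>\<zeta>. \<omega> - \<zeta>" and j = "\<lambda>\<zeta>. \<omega> - \<zeta>"]) (auto simp: Diff_Diff_Int Int_absorb1 Int_absorb2)
    also have "\<dots> = (\<Sum>\<zeta>\<in>Pow \<omega>. of_bool (\<forall>e\<in>\<omega> - \<zeta>. B e) * ?c ^ card (\<omega> - \<zeta>) * a ^ card \<zeta>)"
      by (rule sum.cong[OF refl]) (simp add: double_diff)
    finally have p3': "(\<Prod>e\<in>\<omega>. ?c * of_bool (B e) + a) = \<dots>" .
    show "(\<Prod>e\<in>\<omega>. if A e then a + ?c * of_bool (B e) else 0) * (\<Prod>e\<in>E - \<omega>. if B e then b else 0)
        = (\<Sum>\<zeta>\<in>Pow \<omega>. wt E a b \<omega> \<zeta> * of_bool (\<forall>e\<in>\<omega>. A e) * of_bool (\<forall>e\<in>E - \<zeta>. B e))"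
      unfolding p1 p2 p3' sum_distrib_left sum_distrib_right
    proof (rule sum.cong[OF refl])
      fix \<zeta> assume "\<zeta> \<in> Pow \<omega>"
      then have z: "\<zeta> \<subseteq> \<omega>" by auto
      have "(\<forall>e\<in>E - \<zeta>. B e) \<longleftrightarrow> (\<forall>e\<in>\<omega> - \<zeta>. B e) \<and> (\<forall>e\<in>E - \<omega>. B e)" using z om by blast
      then show "of_bool (\<forall>e\<in>\<omega>. A e) * (of_bool (\<forall>e\<in>\<omega> - \<zeta>. B e) * ?c ^ card (\<omega> - \<zeta>) * a ^ card \<zeta>) *
          (of_bool (\<forall>e\<in>E - \<omega>. B e) * b ^ card (E - \<omega>))
          = wt E a b \<omega> \<zeta> * of_bool (\<forall>e\<in>\<omega>. A e) * of_bool (\<forall>e\<in>E - \<zeta>. B e)"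
        unfolding wt_def by simp
    qed
  qed
  finally show ?thesis .
qed




definition om :: "('e \<times> bool) set \<Rightarrow> 'e set" where "om S = {e. (e, True) \<in> S}"
definition ze :: "('e \<times> bool) set \<Rightarrow> 'e set" where "ze S = {e. (e, False) \<in> S}"

lemma om_ze_simps: "om (S \<union> T) = om S \<union> om T" "om (S \<inter> T) = om S \<inter> om T"
  "ze (S \<union> T) = ze S \<union> ze T" "ze (S \<inter> T) = ze S \<inter> ze T"
  unfolding om_def ze_def by auto

lemma om_sub: "S \<subseteq> E \<times> UNIV \<Longrightarrow> om S \<subseteq> E" unfolding om_def by auto
lemma om_mono: "S \<subseteq> T \<Longrightarrow> om S \<subseteq> om T" unfolding om_def by auto

lemma sum_pairs:
  assumes fin: "finite E"
  shows "(\<Sum>\<omega>\<in>Pow E. \<Sum>\<zeta>\<in>Pow \<omega>. h \<omega> \<zeta>)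
    = (\<Sum>S\<in>Pow (E \<times> (UNIV :: bool set)). if ze S \<subseteq> om S then h (om S) (ze S) else (0::real))"
proof -
  have "(\<Sum>\<omega>\<in>Pow E. \<Sum>\<zeta>\<in>Pow \<omega>. h \<omega> \<zeta>) = (\<Sum>\<omega>\<in>Pow E. \<Sum>\<zeta>\<in>Pow E. if \<zeta> \<subseteq> \<omega> then h \<omega> \<zeta> else 0)"
  proof (rule sum.cong[OF refl])
    fix \<omega> assume "\<omega> \<in> Pow E"
    then have pe: "Pow \<omega> = {\<zeta> \<in> Pow E. \<zeta> \<subseteq> \<omega>}" by auto
    show "(\<Sum>\<zeta>\<in>Pow \<omega>. h \<omega> \<zeta>) = (\<Sum>\<zeta>\<in>Pow E. if \<zeta> \<subseteq> \<omega> then h \<omega> \<zeta> else 0)"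
      unfolding pe by (rule sum.inter_filter) (use fin in simp)
  qed
  also have "\<dots> = (\<Sum>(\<omega>, \<zeta>)\<in>Pow E \<times> Pow E. if \<zeta> \<subseteq> \<omega> then h \<omega> \<zeta> else 0)"
    by (rule sum.cartesian_product)
  also have "\<dots> = (\<Sum>S\<in>Pow (E \<times> (UNIV :: bool set)). if ze S \<subseteq> om S then h (om S) (ze S) else 0)"
  proof (rule sum.reindex_bij_witness[symmetric, where j = "\<lambda>S. (om S, ze S)" and i = "\<lambda>(\<omega>, \<zeta>). \<omega> \<times> {True} \<union> \<zeta> \<times> {False}"])
    fix S :: "('a \<times> bool) set" assume "S \<in> Pow (E \<times> UNIV)"
    show "(case (om S, ze S) of (\<omega>, \<zeta>) \<Rightarrow> \<omega> \<times> {True} \<union> \<zeta> \<times> {False}) = S"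
      unfolding om_def ze_def by (auto, (metis (full_types))+)
  next
    fix S :: "('a \<times> bool) set" assume "S \<in> Pow (E \<times> UNIV)"
    then show "(om S, ze S) \<in> Pow E \<times> Pow E" unfolding om_def ze_def by auto
  next
    fix p :: "'a set \<times> 'a set" assume "p \<in> Pow E \<times> Pow E"
    then show "(om (case p of (\<omega>, \<zeta>) \<Rightarrow> \<omega> \<times> {True} \<union> \<zeta> \<times> {False}), ze (case p of (\<omega>, \<zeta>) \<Rightarrow> \<omega> \<times> {True} \<union> \<zeta> \<times> {False})) = p"
      unfolding om_def ze_def by (cases p) auto
  next
    fix p :: "'a set \<times> 'a set" assume "p \<in> Pow E \<times> Pow E"
    then show "(case p of (\<omega>, \<zeta>) \<Rightarrow> \<omega> \<times> {True} \<union> \<zeta> \<times> {False}) \<in> Pow (E \<times> UNIV)" by (cases p) auto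
  qed auto
  finally show ?thesis .
qed

lemma sum_swap4:
  "(\<Sum>x\<in>A. \<Sum>y\<in>B. \<Sum>\<omega>\<in>C. \<Sum>\<zeta>\<in>D \<omega>. g x y \<omega> \<zeta>) = (\<Sum>\<omega>\<in>C. \<Sum>\<zeta>\<in>D \<omega>. \<Sum>x\<in>A. \<Sum>y\<in>B. (g x y \<omega> \<zeta> :: real))"
proof -
  have "(\<Sum>x\<in>A. \<Sum>y\<in>B. \<Sum>\<omega>\<in>C. \<Sum>\<zeta>\<in>D \<omega>. g x y \<omega> \<zeta>) = (\<Sum>x\<in>A. \<Sum>\<omega>\<in>C. \<Sum>y\<in>B. \<Sum>\<zeta>\<in>D \<omega>. g x y \<omega> \<zeta>)"
    by (rule sum.cong[OF refl], rule sum.swap)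
  also have "\<dots> = (\<Sum>x\<in>A. \<Sum>\<omega>\<in>C. \<Sum>\<zeta>\<in>D \<omega>. \<Sum>y\<in>B. g x y \<omega> \<zeta>)"
    by (rule sum.cong[OF refl], rule sum.cong[OF refl], rule sum.swap)
  also have "\<dots> = (\<Sum>\<omega>\<in>C. \<Sum>x\<in>A. \<Sum>\<zeta>\<in>D \<omega>. \<Sum>y\<in>B. g x y \<omega> \<zeta>)"
    by (rule sum.swap)
  also have "\<dots> = (\<Sum>\<omega>\<in>C. \<Sum>\<zeta>\<in>D \<omega>. \<Sum>x\<in>A. \<Sum>y\<in>B. g x y \<omega> \<zeta>)"
    by (rule sum.cong[OF refl], rule sum.swap)
  finally show ?thesis .
qed

lemma sum_sep: "(\<Sum>x\<in>A. \<Sum>y\<in>B. w * X x * Y y) = w * sum X A * (sum Y B :: real)"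
proof -
  have "w * sum X A * sum Y B = w * (\<Sum>x\<in>A. \<Sum>y\<in>B. X x * Y y)" by (simp add: sum_product)
  then show ?thesis by (simp add: sum_distrib_left mult.assoc)
qed

lemma TT_eq:
  fixes f :: "('v \<Rightarrow> real) \<Rightarrow> real" and Q :: "real set" and Q' :: "'b set"
  assumes fin: "finite E" "finite V" "finite U" "finite Q" "finite Q'"
  shows "(\<Sum>\<sigma>\<in>V \<rightarrow>\<^sub>E Q. \<Sum>\<sigma>'\<in>U \<rightarrow>\<^sub>E Q'. (\<Prod>e\<in>E. phi a b (\<sigma> (x1 e) = \<sigma> (x2 e)) (\<sigma>' (y1 e) = \<sigma>' (y2 e))) * f \<sigma>)
    = (\<Sum>\<omega>\<in>Pow E. \<Sum>\<zeta>\<in>Pow \<omega>. wt E a b \<omega> \<zeta> * (\<Sum>\<sigma>\<in>gcomp V Q \<omega> x1 x2. f \<sigma>) * real (card (gcomp U Q' (E - \<zeta>) y1 y2)))"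
proof -
  let ?A = "\<lambda>\<omega> \<sigma>. \<forall>e\<in>\<omega>. \<sigma> (x1 e) = \<sigma> (x2 e)"
  let ?B = "\<lambda>\<eta> \<sigma>'. \<forall>e\<in>\<eta>. \<sigma>' (y1 e) = \<sigma>' (y2 e)"
  have "(\<Sum>\<sigma>\<in>V \<rightarrow>\<^sub>E Q. \<Sum>\<sigma>'\<in>U \<rightarrow>\<^sub>E Q'. (\<Prod>e\<in>E. phi a b (\<sigma> (x1 e) = \<sigma> (x2 e)) (\<sigma>' (y1 e) = \<sigma>' (y2 e))) * f \<sigma>)
     = (\<Sum>\<sigma>\<in>V \<rightarrow>\<^sub>E Q. \<Sum>\<sigma>'\<in>U \<rightarrow>\<^sub>E Q'. \<Sum>\<omega>\<in>Pow E. \<Sum>\<zeta>\<in>Pow \<omega>.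
          wt E a b \<omega> \<zeta> * (of_bool (?A \<omega> \<sigma>) * f \<sigma>) * of_bool (?B (E - \<zeta>) \<sigma>'))"
    unfolding expand_phi[OF fin(1)] sum_distrib_right
    by (intro sum.cong refl) (simp add: mult_ac)
  also have "\<dots> = (\<Sum>\<omega>\<in>Pow E. \<Sum>\<zeta>\<in>Pow \<omega>. \<Sum>\<sigma>\<in>V \<rightarrow>\<^sub>E Q. \<Sum>\<sigma>'\<in>U \<rightarrow>\<^sub>E Q'.
          wt E a b \<omega> \<zeta> * (of_bool (?A \<omega> \<sigma>) * f \<sigma>) * of_bool (?B (E - \<zeta>) \<sigma>'))"
    by (rule sum_swap4)
  also have "\<dots> = (\<Sum>\<omega>\<in>Pow E. \<Sum>\<zeta>\<in>Pow \<omega>. wt E a b \<omega> \<zeta> * (\<Sum>\<sigma>\<in>V \<rightarrow>\<^sub>E Q. of_bool (?A \<omega> \<sigma>) * f \<sigma>)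
          * (\<Sum>\<sigma>'\<in>U \<rightarrow>\<^sub>E Q'. of_bool (?B (E - \<zeta>) \<sigma>')))"
    by (intro sum.cong refl sum_sep)
  also have "\<dots> = (\<Sum>\<omega>\<in>Pow E. \<Sum>\<zeta>\<in>Pow \<omega>. wt E a b \<omega> \<zeta> * (\<Sum>\<sigma>\<in>gcomp V Q \<omega> x1 x2. f \<sigma>) * real (card (gcomp U Q' (E - \<zeta>) y1 y2)))"
  proof (intro sum.cong refl)
    fix \<omega> \<zeta>
    have fP: "finite (V \<rightarrow>\<^sub>E Q)" "finite (U \<rightarrow>\<^sub>E Q')" using fin by (auto intro: finite_PiE)
    have "(\<Sum>\<sigma>\<in>gcomp V Q \<omega> x1 x2. f \<sigma>) = (\<Sum>\<sigma>\<in>V \<rightarrow>\<^sub>E Q. if ?A \<omega> \<sigma> then f \<sigma> else 0)"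
      unfolding gcomp_def using fP by (simp add: sum.inter_filter)
    moreover have "real (card (gcomp U Q' (E - \<zeta>) y1 y2)) = (\<Sum>\<sigma>'\<in>U \<rightarrow>\<^sub>E Q'. if ?B (E - \<zeta>) \<sigma>' then 1 else 0)"
      unfolding gcomp_def using fP sum.inter_filter[OF fP(2), of "\<lambda>_. (1::real)" "?B (E - \<zeta>)"] by simp
    moreover have "(\<Sum>\<sigma>\<in>V \<rightarrow>\<^sub>E Q. of_bool (?A \<omega> \<sigma>) * f \<sigma>) = (\<Sum>\<sigma>\<in>V \<rightarrow>\<^sub>E Q. if ?A \<omega> \<sigma> then f \<sigma> else 0)"
      by (intro sum.cong) auto
    moreover have "(\<Sum>\<sigma>'\<in>U \<rightarrow>\<^sub>E Q'. (of_bool (?B (E - \<zeta>) \<sigma>') :: real)) = (\<Sum>\<sigma>'\<in>U \<rightarrow>\<^sub>E Q'. if ?B (E - \<zeta>) \<sigma>' then 1 else 0)"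
      by (intro sum.cong) auto
    ultimately show "wt E a b \<omega> \<zeta> * (\<Sum>\<sigma>\<in>V \<rightarrow>\<^sub>E Q. of_bool (?A \<omega> \<sigma>) * f \<sigma>) * (\<Sum>\<sigma>'\<in>U \<rightarrow>\<^sub>E Q'. of_bool (?B (E - \<zeta>) \<sigma>'))
        = wt E a b \<omega> \<zeta> * (\<Sum>\<sigma>\<in>gcomp V Q \<omega> x1 x2. f \<sigma>) * real (card (gcomp U Q' (E - \<zeta>) y1 y2))"
      by simp
  qed
  finally show ?thesis .
qed

lemma wt_lattice:
  assumes fin: "finite E" and s: "\<zeta> \<subseteq> \<omega>" "\<omega> \<subseteq> E" "\<zeta>' \<subseteq> \<omega>'" "\<omega>' \<subseteq> E"
  shows "wt E a b \<omega> \<zeta> * wt E a b \<omega>' \<zeta>' = wt E a b (\<omega> \<union> \<omega>') (\<zeta> \<union> \<zeta>') * wt E a b (\<omega> \<inter> \<omega>') (\<zeta> \<inter> \<zeta>')"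
proof -
  let ?c = "1 - a - b"
  have f: "finite \<omega>" "finite \<omega>'" "finite \<zeta>" "finite \<zeta>'"
    using finite_subset[OF s(2) fin] finite_subset[OF s(4) fin] finite_subset[OF s(1)] finite_subset[OF s(3)] by auto
  have h1: "card \<omega> + card \<omega>' = card (\<omega> \<union> \<omega>') + card (\<omega> \<inter> \<omega>')" using card_Un_Int f by blast
  have h2: "card \<zeta> + card \<zeta>' = card (\<zeta> \<union> \<zeta>') + card (\<zeta> \<inter> \<zeta>')" using card_Un_Int f by blast
  have d: "card (\<omega> - \<zeta>) = card \<omega> - card \<zeta>" "card (\<omega>' - \<zeta>') = card \<omega>' - card \<zeta>'"
    "card ((\<omega> \<union> \<omega>') - (\<zeta> \<union> \<zeta>')) = card (\<omega> \<union> \<omega>') - card (\<zeta> \<union> \<zeta>')"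
    "card ((\<omega> \<inter> \<omega>') - (\<zeta> \<inter> \<zeta>')) = card (\<omega> \<inter> \<omega>') - card (\<zeta> \<inter> \<zeta>')"
    "card (E - \<omega>) = card E - card \<omega>" "card (E - \<omega>') = card E - card \<omega>'"
    "card (E - (\<omega> \<union> \<omega>')) = card E - card (\<omega> \<union> \<omega>')" "card (E - (\<omega> \<inter> \<omega>')) = card E - card (\<omega> \<inter> \<omega>')"
    using s f fin by (auto intro!: card_Diff_subset)
  have m: "card \<zeta> \<le> card \<omega>" "card \<zeta>' \<le> card \<omega>'" "card (\<zeta> \<union> \<zeta>') \<le> card (\<omega> \<union> \<omega>')"
    "card (\<zeta> \<inter> \<zeta>') \<le> card (\<omega> \<inter> \<omega>')" "card \<omega> \<le> card E" "card \<omega>' \<le> card E"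
    "card (\<omega> \<union> \<omega>') \<le> card E" "card (\<omega> \<inter> \<omega>') \<le> card E"
    using s f fin by (auto intro!: card_mono)
  have eA: "card (\<omega> - \<zeta>) + card (\<omega>' - \<zeta>') = card ((\<omega> \<union> \<omega>') - (\<zeta> \<union> \<zeta>')) + card ((\<omega> \<inter> \<omega>') - (\<zeta> \<inter> \<zeta>'))"
    unfolding d using h1 h2 m by linarith
  have eB: "card (E - \<omega>) + card (E - \<omega>') = card (E - (\<omega> \<union> \<omega>')) + card (E - (\<omega> \<inter> \<omega>'))"
    unfolding d using h1 m by linarith
  have "wt E a b \<omega> \<zeta> * wt E a b \<omega>' \<zeta>' = a ^ (card \<zeta> + card \<zeta>') * ?c ^ (card (\<omega> - \<zeta>) + card (\<omega>' - \<zeta>'))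
      * b ^ (card (E - \<omega>) + card (E - \<omega>'))"
    unfolding wt_def power_add by (simp add: mult_ac)
  also have "\<dots> = a ^ (card (\<zeta> \<union> \<zeta>') + card (\<zeta> \<inter> \<zeta>')) * ?c ^ (card ((\<omega> \<union> \<omega>') - (\<zeta> \<union> \<zeta>')) + card ((\<omega> \<inter> \<omega>') - (\<zeta> \<inter> \<zeta>')))
      * b ^ (card (E - (\<omega> \<union> \<omega>')) + card (E - (\<omega> \<inter> \<omega>')))"
    unfolding h2 eA eB ..
  also have "\<dots> = wt E a b (\<omega> \<union> \<omega>') (\<zeta> \<union> \<zeta>') * wt E a b (\<omega> \<inter> \<omega>') (\<zeta> \<inter> \<zeta>')"
    unfolding wt_def power_add by (simp add: mult_ac)
  finally show ?thesis .
qed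




lemma phi_nonneg: "0 \<le> a \<Longrightarrow> 0 \<le> b \<Longrightarrow> a + b \<le> 1 \<Longrightarrow> 0 \<le> phi a b A B"
  unfolding phi_def by auto

lemma wt_nonneg: "0 \<le> a \<Longrightarrow> 0 \<le> b \<Longrightarrow> a + b \<le> 1 \<Longrightarrow> 0 \<le> wt E a b \<omega> \<zeta>"
  unfolding wt_def by (intro mult_nonneg_nonneg zero_le_power) auto

theorem abstract_main:
  fixes V :: "'v set" and U :: "'u set" and E :: "'e set" and x1 x2 :: "'e \<Rightarrow> 'v"
    and y1 y2 :: "'e \<Rightarrow> 'u" and Q :: "real set" and Q' :: "'b set" and a b :: real
    and k :: nat and v :: "nat \<Rightarrow> 'v" and r s :: "nat \<Rightarrow> nat"
  assumes fin: "finite V" "finite U" "finite E"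
    and EV: "\<forall>e\<in>E. x1 e \<in> V \<and> x2 e \<in> V" and EU: "\<forall>e\<in>E. y1 e \<in> U \<and> y2 e \<in> U"
    and Q: "finite Q" "uminus ` Q = Q" "Q \<noteq> {}" and Q': "finite Q'" "Q' \<noteq> {}"
    and ab: "0 < a" "0 < b" "a + b \<le> 1" and vV: "\<forall>i<k. v i \<in> V"
    and TT: "TT = (\<lambda>m. \<Sum>\<sigma>\<in>V \<rightarrow>\<^sub>E Q. \<Sum>\<sigma>'\<in>U \<rightarrow>\<^sub>E Q'.
        (\<Prod>e\<in>E. phi a b (\<sigma> (x1 e) = \<sigma> (x2 e)) (\<sigma>' (y1 e) = \<sigma>' (y2 e))) * (\<Prod>i<k. \<sigma> (v i) ^ m i))"
  shows "TT r * TT s \<le> TT (\<lambda>i. r i + s i) * TT (\<lambda>_. 0) \<and> TT (\<lambda>_. 0) > 0"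
proof -
  let ?X = "E \<times> (UNIV :: bool set)"
  have finX: "finite ?X" using fin by simp
  define N where "N \<omega> = real (card (gcomp V Q \<omega> x1 x2))" for \<omega>
  define N' where "N' \<eta> = real (card (gcomp U Q' \<eta> y1 y2))" for \<eta>
  define \<mu> where "\<mu> S = (if ze S \<subseteq> om S then wt E a b (om S) (ze S) * N (om S) * N' (E - ze S) else 0)" for S
  define G where "G m S = gg V (om S) x1 x2 Q k v m" for m S
  have ab': "0 \<le> a" "0 \<le> b" "a + b \<le> 1" using ab by auto
  have rep: "TT m = (\<Sum>S\<in>Pow ?X. \<mu> S * G m S)" for m
  proof -
    have "TT m = (\<Sum>\<omega>\<in>Pow E. \<Sum>\<zeta>\<in>Pow \<omega>. wt E a b \<omega> \<zeta> * (\<Sum>\<sigma>\<in>gcomp V Q \<omega> x1 x2. \<Prod>i<k. \<sigma> (v i) ^ m i) * N' (E - \<zeta>))"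
      unfolding TT N'_def by (rule TT_eq) (use fin Q Q' in auto)
    also have "\<dots> = (\<Sum>\<omega>\<in>Pow E. \<Sum>\<zeta>\<in>Pow \<omega>. wt E a b \<omega> \<zeta> * (N \<omega> * gg V \<omega> x1 x2 Q k v m) * N' (E - \<zeta>))"
    proof (intro sum.cong refl)
      fix \<omega> \<zeta> assume "\<omega> \<in> Pow E"
      then have "\<forall>e\<in>\<omega>. x1 e \<in> V \<and> x2 e \<in> V" using EV by auto
      then show "wt E a b \<omega> \<zeta> * (\<Sum>\<sigma>\<in>gcomp V Q \<omega> x1 x2. \<Prod>i<k. \<sigma> (v i) ^ m i) * N' (E - \<zeta>)
          = wt E a b \<omega> \<zeta> * (N \<omega> * gg V \<omega> x1 x2 Q k v m) * N' (E - \<zeta>)"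
        unfolding N_def using sum_gcomp_gg[of \<omega> x1 V x2 Q k v m] fin Q vV by simp
    qed
    also have "\<dots> = (\<Sum>S\<in>Pow ?X. if ze S \<subseteq> om S then wt E a b (om S) (ze S) * (N (om S) * gg V (om S) x1 x2 Q k v m) * N' (E - ze S) else 0)"
      by (rule sum_pairs[OF fin(3)])
    also have "\<dots> = (\<Sum>S\<in>Pow ?X. \<mu> S * G m S)"
      unfolding \<mu>_def G_def by (intro sum.cong refl) (simp add: mult_ac)
    finally show ?thesis .
  qed
  have N0: "0 \<le> N \<omega>" "0 \<le> N' \<omega>" for \<omega> unfolding N_def N'_def by auto
  have mu0: "0 \<le> \<mu> S" for S unfolding \<mu>_def using wt_nonneg[OF ab'] N0 by (auto intro!: mult_nonneg_nonneg)
  have lat: "\<mu> A * \<mu> B \<le> \<mu> (A \<union> B) * \<mu> (A \<inter> B)" if AB: "A \<subseteq> ?X" "B \<subseteq> ?X" for A B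
  proof (cases "ze A \<subseteq> om A \<and> ze B \<subseteq> om B")
    case False
    then have "\<mu> A * \<mu> B = 0" unfolding \<mu>_def by auto
    moreover have "0 \<le> \<mu> (A \<union> B) * \<mu> (A \<inter> B)" using mu0 by simp
    ultimately show ?thesis by linarith
  next
    case True
    have oE: "om A \<subseteq> E" "om B \<subseteq> E" using om_sub[OF AB(1)] om_sub[OF AB(2)] by auto
    have w: "wt E a b (om A) (ze A) * wt E a b (om B) (ze B)
        = wt E a b (om A \<union> om B) (ze A \<union> ze B) * wt E a b (om A \<inter> om B) (ze A \<inter> ze B)"
      using wt_lattice[OF fin(3)] True oE by blast
    have n1: "N (om A) * N (om B) \<le> N (om A \<union> om B) * N (om A \<inter> om B)"
      unfolding N_def by (rule card_gcomp_supermod[OF EV fin(1) fin(3) Q(1) Q(3) oE])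
    have n2: "N' (E - ze A) * N' (E - ze B) \<le> N' ((E - ze A) \<union> (E - ze B)) * N' ((E - ze A) \<inter> (E - ze B))"
      unfolding N'_def by (rule card_gcomp_supermod[OF EU fin(2) fin(3) Q'(1) Q'(2)]) auto
    have s1: "(E - ze A) \<union> (E - ze B) = E - (ze A \<inter> ze B)" "(E - ze A) \<inter> (E - ze B) = E - (ze A \<union> ze B)" by auto
    have "\<mu> A * \<mu> B = (wt E a b (om A) (ze A) * wt E a b (om B) (ze B)) * (N (om A) * N (om B))
        * (N' (E - ze A) * N' (E - ze B))"
      unfolding \<mu>_def using True by (simp add: mult_ac)
    also have "\<dots> \<le> (wt E a b (om A) (ze A) * wt E a b (om B) (ze B)) * (N (om A \<union> om B) * N (om A \<inter> om B))
        * (N' (E - (ze A \<inter> ze B)) * N' (E - (ze A \<union> ze B)))"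
    proof (rule mult_mono)
      show "wt E a b (om A) (ze A) * wt E a b (om B) (ze B) * (N (om A) * N (om B))
          \<le> wt E a b (om A) (ze A) * wt E a b (om B) (ze B) * (N (om A \<union> om B) * N (om A \<inter> om B))"
        by (rule mult_left_mono[OF n1]) (simp add: wt_nonneg[OF ab'])
      show "N' (E - ze A) * N' (E - ze B) \<le> N' (E - (ze A \<inter> ze B)) * N' (E - (ze A \<union> ze B))"
        using n2 unfolding s1 .
    qed (simp_all add: wt_nonneg[OF ab'] N0)
    also have "\<dots> = \<mu> (A \<union> B) * \<mu> (A \<inter> B)"
      unfolding \<mu>_def om_ze_simps w using True by (auto simp: mult_ac)
    finally show ?thesis .
  qed
  have G0: "0 \<le> G m S" for m S unfolding G_def by (rule gg_nonneg[OF Q(1,2)])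
  have Gm: "G m A \<le> G m B" if "A \<subseteq> B" "B \<subseteq> ?X" for m A B
    unfolding G_def using gg_mono[OF EV fin(1) Q vV om_mono[OF that(1)] om_sub[OF that(2)]] .
  have fkg: "(\<Sum>S\<in>Pow ?X. \<mu> S * G r S) * (\<Sum>S\<in>Pow ?X. \<mu> S * G s S)
      \<le> (\<Sum>S\<in>Pow ?X. \<mu> S * (G r S * G s S)) * (\<Sum>S\<in>Pow ?X. \<mu> S)"
    by (rule fkg_pow[OF finX mu0 G0 G0 lat Gm Gm])
  have Gzero: "G (\<lambda>_. 0) S = 1" for S unfolding G_def by (rule gg_zero[OF Q(1,3)])
  have T0: "TT (\<lambda>_. 0) = (\<Sum>S\<in>Pow ?X. \<mu> S)" unfolding rep Gzero by simp
  have T0nn: "0 \<le> (\<Sum>S\<in>Pow ?X. \<mu> S)" using mu0 by (simp add: sum_nonneg)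
  have "(\<Sum>S\<in>Pow ?X. \<mu> S * (G r S * G s S)) \<le> (\<Sum>S\<in>Pow ?X. \<mu> S * G (\<lambda>i. r i + s i) S)"
    unfolding G_def by (intro sum_mono mult_left_mono gg_mult Q mu0)
  then have "(\<Sum>S\<in>Pow ?X. \<mu> S * (G r S * G s S)) * (\<Sum>S\<in>Pow ?X. \<mu> S)
      \<le> (\<Sum>S\<in>Pow ?X. \<mu> S * G (\<lambda>i. r i + s i) S) * (\<Sum>S\<in>Pow ?X. \<mu> S)"
    by (rule mult_right_mono[OF _ T0nn])
  with fkg have ineq: "TT r * TT s \<le> TT (\<lambda>i. r i + s i) * TT (\<lambda>_. 0)"
    unfolding rep[of r] rep[of s] rep[of "\<lambda>i. r i + s i"] T0 by linarith
  obtain q0 where q0: "q0 \<in> Q" using Q by auto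
  obtain q0' where q0': "q0' \<in> Q'" using Q' by auto
  define \<sigma>0 where "\<sigma>0 = (\<lambda>u\<in>V. q0)"
  define \<sigma>0' where "\<sigma>0' = (\<lambda>u\<in>U. q0')"
  have s0: "\<sigma>0 \<in> V \<rightarrow>\<^sub>E Q" "\<sigma>0' \<in> U \<rightarrow>\<^sub>E Q'" unfolding \<sigma>0_def \<sigma>0'_def using q0 q0' by auto
  let ?P = "\<lambda>\<sigma> \<sigma>'. (\<Prod>e\<in>E. phi a b (\<sigma> (x1 e) = \<sigma> (x2 e)) (\<sigma>' (y1 e) = \<sigma>' (y2 e))) * (\<Prod>i<k. \<sigma> (v i) ^ (0::nat))"
  have Pnn: "0 \<le> ?P \<sigma> \<sigma>'" for \<sigma> \<sigma>' by (simp add: prod_nonneg phi_nonneg[OF ab'])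
  have P1: "?P \<sigma>0 \<sigma>0' = 1"
  proof -
    have "\<forall>e\<in>E. \<sigma>0 (x1 e) = \<sigma>0 (x2 e) \<and> \<sigma>0' (y1 e) = \<sigma>0' (y2 e)" unfolding \<sigma>0_def \<sigma>0'_def using EV EU by auto
    then show ?thesis by (simp add: phi_def)
  qed
  have finP: "finite (V \<rightarrow>\<^sub>E Q)" "finite (U \<rightarrow>\<^sub>E Q')" using fin Q Q' by (auto intro: finite_PiE)
  have "1 \<le> (\<Sum>\<sigma>'\<in>U \<rightarrow>\<^sub>E Q'. ?P \<sigma>0 \<sigma>')"
    using member_le_sum[of \<sigma>0' "U \<rightarrow>\<^sub>E Q'" "?P \<sigma>0", OF s0(2) _ finP(2)] Pnn P1 by auto
  also have "\<dots> \<le> TT (\<lambda>_. 0)"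
  proof -
    have "(\<Sum>\<sigma>'\<in>U \<rightarrow>\<^sub>E Q'. ?P \<sigma>0 \<sigma>') \<le> (\<Sum>\<sigma>\<in>V \<rightarrow>\<^sub>E Q. \<Sum>\<sigma>'\<in>U \<rightarrow>\<^sub>E Q'. ?P \<sigma> \<sigma>')"
      by (rule member_le_sum[OF s0(1) _ finP(1)]) (rule sum_nonneg, rule Pnn)
    then show ?thesis unfolding TT by simp
  qed
  finally show ?thesis using ineq by simp
qed




definition erep :: "'d set \<Rightarrow> ('d \<Rightarrow> 'd) \<Rightarrow> 'd set \<Rightarrow> 'd" where
  "erep D alpha e = (SOME d. d \<in> D \<and> e = {d, alpha d})"

lemma erep:
  assumes "e \<in> edges D alpha"
  shows "erep D alpha e \<in> D \<and> e = {erep D alpha e, alpha (erep D alpha e)}"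
proof -
  have "\<exists>d. d \<in> D \<and> e = {d, alpha d}" using assms unfolding edges_def by auto
  then show ?thesis unfolding erep_def by (rule someI_ex)
qed

lemma cm_alpha:
  assumes "comb_map D alpha rho" "d \<in> D"
  shows "alpha d \<in> D" "alpha (alpha d) = d"
proof -
  have "alpha permutes D" using assms(1) unfolding comb_map_def by auto
  then show "alpha d \<in> D" using assms(2) by (simp add: permutes_in_image)
  show "alpha (alpha d) = d" using assms unfolding comb_map_def by auto
qed

lemma edge_cond:
  assumes cm: "comb_map D alpha rho" and e: "e \<in> edges D alpha"
  shows "(\<exists>d\<in>D. e = {d, alpha d} \<and> g d \<noteq> g (alpha d))
     \<longleftrightarrow> g (erep D alpha e) \<noteq> g (alpha (erep D alpha e))"
proof
  let ?d0 = "erep D alpha e"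
  have d0: "?d0 \<in> D" "e = {?d0, alpha ?d0}" using erep[OF e] by auto
  assume "\<exists>d\<in>D. e = {d, alpha d} \<and> g d \<noteq> g (alpha d)"
  then obtain d where d: "d \<in> D" "e = {d, alpha d}" "g d \<noteq> g (alpha d)" by auto
  have "d \<in> e" using d(2) by simp
  then have "d \<in> {?d0, alpha ?d0}" using d0(2) by simp
  then have "d = ?d0 \<or> d = alpha ?d0" by simp
  then show "g ?d0 \<noteq> g (alpha ?d0)"
  proof
    assume "d = alpha ?d0"
    then have "alpha d = ?d0" using cm_alpha[OF cm d0(1)] by simp
    then show ?thesis using d(3) \<open>d = alpha ?d0\<close> by metis
  next
    assume "d = ?d0"
    then show ?thesis using d(3) by simp
  qed
next
  assume "g (erep D alpha e) \<noteq> g (alpha (erep D alpha e))"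
  then show "\<exists>d\<in>D. e = {d, alpha d} \<and> g d \<noteq> g (alpha d)" using erep[OF e] by blast
qed

lemma prod_if_one:
  fixes z :: real
  assumes "finite A"
  shows "(\<Prod>e\<in>A. if P e then z else 1) = z ^ card {e \<in> A. P e}"
proof -
  have "(\<Prod>e\<in>A. if P e then z else 1) = (\<Prod>e\<in>{e \<in> A. P e}. z)"
    by (rule prod.inter_filter[OF assms, symmetric])
  then show ?thesis by simp
qed

theorem proposition5p2:
  fixes D :: "'d set" and alpha rho :: "'d \<Rightarrow> 'd"
    and Q :: "real set" and Q' :: "complex set" and a b :: real
    and k :: nat and v :: "nat \<Rightarrow> 'd set" and r s :: "nat \<Rightarrow> nat"
  assumes "comb_map D alpha rho"
    and "finite Q" and "Q \<noteq> {}" and "uminus ` Q = Q"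
    and "finite Q'" and "Q' \<noteq> {}" and "uminus ` Q' = Q'"
    and "0 < a" and "a \<le> 1" and "0 < b" and "b \<le> 1" and "a + b \<le> 1"
    and "\<forall>i<k. v i \<in> verts D rho"
  shows "expect D alpha rho Q Q' a b (\<lambda>(\<sigma>, \<sigma>'). \<Prod>i<k. \<sigma> (v i) ^ (r i + s i))
         \<ge> expect D alpha rho Q Q' a b (\<lambda>(\<sigma>, \<sigma>'). \<Prod>i<k. \<sigma> (v i) ^ r i)
           * expect D alpha rho Q Q' a b (\<lambda>(\<sigma>, \<sigma>'). \<Prod>i<k. \<sigma> (v i) ^ s i)"
proof -
  note cm = assms(1)
  let ?E = "edges D alpha"
  let ?V = "verts D rho"
  let ?U = "faces D alpha rho"
  let ?rp = "erep D alpha"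
  define x1 where "x1 e = vtx rho (?rp e)" for e
  define x2 where "x2 e = vtx rho (alpha (?rp e))" for e
  define y1 where "y1 e = fce alpha rho (?rp e)" for e
  define y2 where "y2 e = fce alpha rho (alpha (?rp e))" for e
  have finD: "finite D" using cm unfolding comb_map_def by auto
  have fin: "finite ?V" "finite ?U" "finite ?E" using finD unfolding verts_def faces_def edges_def by auto
  have rpD: "?rp e \<in> D" "alpha (?rp e) \<in> D" if "e \<in> ?E" for e
    using erep[OF that] cm_alpha(1)[OF cm] by auto
  have EV: "\<forall>e\<in>?E. x1 e \<in> ?V \<and> x2 e \<in> ?V"
    unfolding x1_def x2_def verts_def using rpD by auto
  have EU: "\<forall>e\<in>?E. y1 e \<in> ?U \<and> y2 e \<in> ?U"
    unfolding y1_def y2_def faces_def using rpD by auto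
  define TT where "TT = (\<lambda>m. \<Sum>\<sigma>\<in>?V \<rightarrow>\<^sub>E Q. \<Sum>\<sigma>'\<in>?U \<rightarrow>\<^sub>E Q'.
        (\<Prod>e\<in>?E. phi a b (\<sigma> (x1 e) = \<sigma> (x2 e)) (\<sigma>' (y1 e) = \<sigma>' (y2 e))) * (\<Prod>i<k. \<sigma> (v i) ^ m i))"
  have main: "TT r * TT s \<le> TT (\<lambda>i. r i + s i) * TT (\<lambda>_. 0) \<and> TT (\<lambda>_. 0) > 0"
    by (rule abstract_main[OF fin EV EU assms(2,4,3) assms(5,6) assms(8,10,12) assms(13) TT_def])
  have ep: "eta_primal D alpha rho \<sigma> = {e \<in> ?E. \<sigma> (x1 e) \<noteq> \<sigma> (x2 e)}" for \<sigma>
  proof -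
    have "(\<exists>d\<in>D. e = {d, alpha d} \<and> \<sigma> (vtx rho d) \<noteq> \<sigma> (vtx rho (alpha d))) \<longleftrightarrow> \<sigma> (x1 e) \<noteq> \<sigma> (x2 e)"
      if e: "e \<in> ?E" for e
      using edge_cond[OF cm e, where g = "\<lambda>d. \<sigma> (vtx rho d)"] unfolding x1_def x2_def by simp
    then show ?thesis unfolding eta_primal_def by auto
  qed
  have ed: "eta_dual D alpha rho \<sigma>' = {e \<in> ?E. \<sigma>' (y1 e) \<noteq> \<sigma>' (y2 e)}" for \<sigma>'
  proof -
    have "(\<exists>d\<in>D. e = {d, alpha d} \<and> \<sigma>' (fce alpha rho d) \<noteq> \<sigma>' (fce alpha rho (alpha d))) \<longleftrightarrow> \<sigma>' (y1 e) \<noteq> \<sigma>' (y2 e)"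
      if e: "e \<in> ?E" for e
      using edge_cond[OF cm e, where g = "\<lambda>d. \<sigma>' (fce alpha rho d)"] unfolding y1_def y2_def by simp
    then show ?thesis unfolding eta_dual_def by auto
  qed
  let ?Phi = "\<lambda>\<sigma> \<sigma>'. \<Prod>e\<in>?E. phi a b (\<sigma> (x1 e) = \<sigma> (x2 e)) (\<sigma>' (y1 e) = \<sigma>' (y2 e))"
  have Phi_w: "weight D alpha rho a b (\<sigma>, \<sigma>') = ?Phi \<sigma> \<sigma>'" if "(\<sigma>, \<sigma>') \<in> configs D alpha rho Q Q'" for \<sigma> \<sigma>'
  proof -
    have disj: "\<forall>e\<in>?E. \<sigma> (x1 e) = \<sigma> (x2 e) \<or> \<sigma>' (y1 e) = \<sigma>' (y2 e)"
      using that unfolding configs_def ep ed by auto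
    have "?Phi \<sigma> \<sigma>' = (\<Prod>e\<in>?E. (if \<sigma>' (y1 e) \<noteq> \<sigma>' (y2 e) then a else 1) * (if \<sigma> (x1 e) \<noteq> \<sigma> (x2 e) then b else 1))"
      by (rule prod.cong[OF refl]) (use disj in \<open>auto simp: phi_def\<close>)
    also have "\<dots> = a ^ card (eta_dual D alpha rho \<sigma>') * b ^ card (eta_primal D alpha rho \<sigma>)"
      unfolding prod.distrib prod_if_one[OF fin(3)] ep ed ..
    finally show ?thesis unfolding weight_def by simp
  qed
  have Phi0: "?Phi \<sigma> \<sigma>' = 0" if nc: "\<sigma> \<in> ?V \<rightarrow>\<^sub>E Q" "\<sigma>' \<in> ?U \<rightarrow>\<^sub>E Q'" "(\<sigma>, \<sigma>') \<notin> configs D alpha rho Q Q'" for \<sigma> \<sigma>'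
  proof -
    obtain e where e: "e \<in> ?E" "\<sigma> (x1 e) \<noteq> \<sigma> (x2 e)" "\<sigma>' (y1 e) \<noteq> \<sigma>' (y2 e)"
    proof -
      have "eta_primal D alpha rho \<sigma> \<inter> eta_dual D alpha rho \<sigma>' \<noteq> {}" using nc unfolding configs_def by auto
      then show ?thesis using that unfolding ep ed by blast
    qed
    show ?thesis by (rule prod_zero) (use fin e in \<open>auto simp: phi_def\<close>)
  qed
  have num: "(\<Sum>c\<in>configs D alpha rho Q Q'. weight D alpha rho a b c * (\<lambda>(\<sigma>, \<sigma>'). \<Prod>i<k. \<sigma> (v i) ^ m i) c) = TT m" for m
  proof -
    have sub: "configs D alpha rho Q Q' \<subseteq> (?V \<rightarrow>\<^sub>E Q) \<times> (?U \<rightarrow>\<^sub>E Q')" unfolding configs_def by auto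
    have finP: "finite ((?V \<rightarrow>\<^sub>E Q) \<times> (?U \<rightarrow>\<^sub>E Q'))" using fin assms by (auto intro: finite_PiE)
    have "(\<Sum>c\<in>configs D alpha rho Q Q'. weight D alpha rho a b c * (\<lambda>(\<sigma>, \<sigma>'). \<Prod>i<k. \<sigma> (v i) ^ m i) c)
        = (\<Sum>c\<in>(?V \<rightarrow>\<^sub>E Q) \<times> (?U \<rightarrow>\<^sub>E Q'). (\<lambda>(\<sigma>, \<sigma>'). ?Phi \<sigma> \<sigma>' * (\<Prod>i<k. \<sigma> (v i) ^ m i)) c)"
    proof (rule sum.mono_neutral_cong_left[OF finP sub])
      show "\<forall>c\<in>(?V \<rightarrow>\<^sub>E Q) \<times> (?U \<rightarrow>\<^sub>E Q') - configs D alpha rho Q Q'. (\<lambda>(\<sigma>, \<sigma>'). ?Phi \<sigma> \<sigma>' * (\<Prod>i<k. \<sigma> (v i) ^ m i)) c = 0"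
        using Phi0 by auto
      show "\<And>c. c \<in> configs D alpha rho Q Q' \<Longrightarrow> weight D alpha rho a b c * (\<lambda>(\<sigma>, \<sigma>'). \<Prod>i<k. \<sigma> (v i) ^ m i) c
          = (\<lambda>(\<sigma>, \<sigma>'). ?Phi \<sigma> \<sigma>' * (\<Prod>i<k. \<sigma> (v i) ^ m i)) c"
        using Phi_w by auto
    qed
    also have "\<dots> = TT m" unfolding TT_def by (rule sum.cartesian_product[symmetric])
    finally show ?thesis .
  qed
  have den: "(\<Sum>c\<in>configs D alpha rho Q Q'. weight D alpha rho a b c) = TT (\<lambda>_. 0)"
    using num[of "\<lambda>_. 0"] by simp
  have ex: "expect D alpha rho Q Q' a b (\<lambda>(\<sigma>, \<sigma>'). \<Prod>i<k. \<sigma> (v i) ^ m i) = TT m / TT (\<lambda>_. 0)" for m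
    unfolding expect_def num den ..
  have T0: "TT (\<lambda>_. 0) > 0" using main by simp
  have "TT r / TT (\<lambda>_. 0) * (TT s / TT (\<lambda>_. 0)) = (TT r * TT s) / (TT (\<lambda>_. 0) * TT (\<lambda>_. 0))" by simp
  also have "\<dots> \<le> (TT (\<lambda>i. r i + s i) * TT (\<lambda>_. 0)) / (TT (\<lambda>_. 0) * TT (\<lambda>_. 0))"
    by (rule divide_right_mono) (use main T0 in auto)
  also have "\<dots> = TT (\<lambda>i. r i + s i) / TT (\<lambda>_. 0)" using T0 by simp
  finally show ?thesis unfolding ex by simp
qed


end
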